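(* Assume $\mathcal R_0>1$, let $k$ satisfy $$\frac{\beta_E\nu\nu_E-(\nu_E+\delta_E)\delta_F}{\beta_E\nu\nu_E-(1-\gamma_s)(\nu_E+\delta_E)\delta_F}\,\delta_s<k<\delta_s,$$ and let $\kappa>0$ satisfy $$\frac{\delta_s-k}{k}\le\kappa<\frac{\gamma_s\delta_F(\nu_E+\delta_E)}{\beta_E\nu\nu_E-\delta_F(\nu_E+\delta_E)}.$$ Then $\mathbf 0$ is globally asymptotically stable in $\mathcal M(\kappa)$ (in the Filippov sense) for the closed-loop system $$\dot E=\beta_E F\Big(1-\frac EK\Big)-(\nu_E+\delta_E)E,\quad \dot M=(1-\nu)\nu_E E-\delta_M M,\quad \dot F=\nu\nu_E E\frac{M}{M+\gamma_sM_s}-\delta_F F,\quad \dot M_s=k(M+M_s)-\delta_sM_s.$$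
   Context: Parameters: $\beta_E,\nu_E,\delta_E,\delta_M,\delta_F,\delta_s,K>0$, $\nu\in(0,1)$, $\gamma_s\in(0,1]$, $\delta_s\ge\delta_M$. $\mathcal R_0:=\dfrac{\beta_E\nu\nu_E}{\delta_F(\nu_E+\delta_E)}$. $\mathcal D'=[0,+\infty)^4$, $z=(E,M,F,M_s)^T$. $\mathcal T_1=\{z\in\mathcal D':\beta_EF(1-E/K)\le(\nu_E+\delta_E)E\}$, $\mathcal T_2(\kappa)=\{z\in\mathcal D':M\le\kappa M_s\}$, $\mathcal T_3=\{z\in\mathcal D':(1-\nu)\nu_EE\le\delta_MM\}$, $\mathcal M(\kappa)=\mathcal T_1\cap\mathcal T_2(\kappa)\cap\mathcal T_3$. Filippov solutions: locally Lipschitz $z:I\to\mathcal D'$ with $\dot z(t)\in\bigcap_{\varepsilon>0}\bigcap_{N}\overline{\mathrm{conv}}\,X\big(((z(t)+\varepsilon B)\cap\mathcal D')\setminus N\big)$ for a.e. $t$ ($X$ the closed-loop right-hand side, $B$ unit ball, $N$ Lebesgue-null). Globally asymptotically stable in $\mathcal S$: for every $\varepsilon>0$ there is $\delta>0$ such that every Filippov solution with $z(0)\in\mathcal S$, $\|z(0)\|<\delta$ satisfies $\|z(t)\|<\varepsilon$ for all $t>0$, and every Filippov solution with $z(0)\in\mathcal S$ tends to $\mathbf 0$. *)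

theory Defs
  imports "HOL-Analysis.Analysis"
begin

definition Dp :: "(real^4) set" where
  "Dp = {z. \<forall>i. 0 \<le> z $ i}"

text \<open>Closed-loop right-hand side. At M + gamma_s M_s = 0 the quotient is
  0 by Isabelle's convention x / 0 = 0 (irrelevant for Filippov solutions).\<close>
definition closed_loop ::
  "real \<Rightarrow> real \<Rightarrow> real \<Rightarrow> real \<Rightarrow> real \<Rightarrow> real \<Rightarrow> real \<Rightarrow> real \<Rightarrow> real \<Rightarrow> real
   \<Rightarrow> real^4 \<Rightarrow> real^4" where
  "closed_loop \<beta>E \<nu>E \<delta>E \<delta>M \<delta>F \<delta>s K \<nu> \<gamma>s k z =
     (let E = z $ 1; M = z $ 2; F = z $ 3; Ms = z $ 4 in
      vector [\<beta>E * F * (1 - E / K) - (\<nu>E + \<delta>E) * E,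
              (1 - \<nu>) * \<nu>E * E - \<delta>M * M,
              \<nu> * \<nu>E * E * (M / (M + \<gamma>s * Ms)) - \<delta>F * F,
              k * (M + Ms) - \<delta>s * Ms])"

definition T1 :: "real \<Rightarrow> real \<Rightarrow> real \<Rightarrow> real \<Rightarrow> (real^4) set" where
  "T1 \<beta>E \<nu>E \<delta>E K = {z \<in> Dp. \<beta>E * z$3 * (1 - z$1 / K) \<le> (\<nu>E + \<delta>E) * z$1}"

definition T2 :: "real \<Rightarrow> (real^4) set" where
  "T2 \<kappa> = {z \<in> Dp. z$2 \<le> \<kappa> * z$4}"

definition T3 :: "real \<Rightarrow> real \<Rightarrow> real \<Rightarrow> (real^4) set" where
  "T3 \<nu> \<nu>E \<delta>M = {z \<in> Dp. (1 - \<nu>) * \<nu>E * z$1 \<le> \<delta>M * z$2}"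

definition Mset :: "real \<Rightarrow> real \<Rightarrow> real \<Rightarrow> real \<Rightarrow> real \<Rightarrow> real \<Rightarrow> real \<Rightarrow> (real^4) set" where
  "Mset \<beta>E \<nu>E \<delta>E \<delta>M K \<nu> \<kappa> = T1 \<beta>E \<nu>E \<delta>E K \<inter> T2 \<kappa> \<inter> T3 \<nu> \<nu>E \<delta>M"

definition filippov_set :: "(real^4 \<Rightarrow> real^4) \<Rightarrow> (real^4) set \<Rightarrow> real^4 \<Rightarrow> (real^4) set" where
  "filippov_set X D x =
     (\<Inter>\<epsilon>\<in>{0<..}. \<Inter>N\<in>null_sets lebesgue.
        closure (convex hull (X ` ((cball x \<epsilon> \<inter> D) - N))))"

definition filippov_solution :: "(real^4 \<Rightarrow> real^4) \<Rightarrow> (real^4) set \<Rightarrow> (real \<Rightarrow> real^4) \<Rightarrow> bool" where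
  "filippov_solution X D z \<longleftrightarrow>
     (\<forall>t\<ge>0. z t \<in> D) \<and>
     (\<forall>t\<ge>0. \<exists>\<delta>>0. \<exists>L. L-lipschitz_on (cball t \<delta> \<inter> {0..}) z) \<and>
     (AE t in lborel. 0 < t \<longrightarrow>
        (\<exists>v. (z has_vector_derivative v) (at t) \<and> v \<in> filippov_set X D (z t)))"

definition filippov_GAS :: "(real^4 \<Rightarrow> real^4) \<Rightarrow> (real^4) set \<Rightarrow> (real^4) set \<Rightarrow> bool" where
  "filippov_GAS X D S \<longleftrightarrow>
     (\<forall>\<epsilon>>0. \<exists>\<delta>>0. \<forall>z. filippov_solution X D z \<and> z 0 \<in> S \<and> norm (z 0) < \<delta> \<longrightarrow>
                        (\<forall>t>0. norm (z t) < \<epsilon>)) \<and>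
     (\<forall>z. filippov_solution X D z \<and> z 0 \<in> S \<longrightarrow> (z \<longlongrightarrow> 0) at_top)"

end

theory Submission imports Defs begin


lemma vector4 [simp]:
 "(vector [x,y,z,w] ::('a::zero)^4)$1 = x"
 "(vector [x,y,z,w] ::('a::zero)^4)$2 = y"
 "(vector [x,y,z,w] ::('a::zero)^4)$3 = z"
 "(vector [x,y,z,w] ::('a::zero)^4)$4 = w"
  unfolding vector_def by simp_all

lemma dini_mono:
  fixes g :: "real \<Rightarrow> real"
  assumes ab: "a \<le> b" and cont: "continuous_on {a..b} g" and negN: "negligible N"
  and calm: "\<And>x. x \<in> N \<Longrightarrow> x \<in> {a..b} \<Longrightarrow> \<exists>T B. open T \<and> x \<in> T \<and> (\<forall>y\<in>{a..b}\<inter>T. \<bar>g y - g x\<bar> \<le> B * \<bar>y - x\<bar>)"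
  and dini: "\<And>s e. s \<in> {a<..<b} \<Longrightarrow> s \<notin> N \<Longrightarrow> e > 0 \<Longrightarrow> \<exists>t\<in>{s<..b}. g t - g s \<le> e * (t - s)"
  shows "g b \<le> g a"
proof (rule ccontr)
  assume "\<not> g b \<le> g a"
  then have gab: "g a < g b" by simp
  with ab have "a < b" by (cases "a = b") auto
  define e where "e = (g b - g a) / (2 * (b - a))"
  have e0: "e > 0" using gab \<open>a < b\<close> by (simp add: e_def)
  define h where "h t = g t - e * (t - a)" for t
  have "e * (b - a) = (g b - g a) / 2" using \<open>a < b\<close> by (simp add: e_def field_simps)
  then have hab: "h a < h b" using gab by (simp add: h_def)
  have cont_h: "continuous_on {a..b} h" unfolding h_def by (intro continuous_intros cont)
  have negh: "negligible (h ` (N \<inter> {a..b}))"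
  proof (rule negligible_locally_Lipschitz_image)
    show "DIM(real) \<le> DIM(real)" by simp
    show "negligible (N \<inter> {a..b})" using negN by (rule negligible_subset) auto
    fix x assume x: "x \<in> N \<inter> {a..b}"
    then obtain T B where T: "open T" "x \<in> T" "\<forall>y\<in>{a..b}\<inter>T. \<bar>g y - g x\<bar> \<le> B * \<bar>y - x\<bar>"
      using calm by blast
    show "\<exists>T B. open T \<and> x \<in> T \<and> (\<forall>y\<in>N \<inter> {a..b} \<inter> T. norm (h y - h x) \<le> B * norm (y - x))"
    proof (intro exI conjI ballI)
      show "open T" "x \<in> T" by fact+
      fix y assume y: "y \<in> N \<inter> {a..b} \<inter> T"
      have "\<bar>g y - g x\<bar> \<le> B * \<bar>y - x\<bar>" using T y by blast
      then have "\<bar>h y - h x\<bar> \<le> B * \<bar>y - x\<bar> + e * \<bar>y - x\<bar>"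
        
      proof -
        have "h y - h x = (g y - g x) - e * (y - x)" by (simp add: h_def algebra_simps)
        then have "\<bar>h y - h x\<bar> \<le> \<bar>g y - g x\<bar> + \<bar>e * (y - x)\<bar>" by linarith
        moreover have "\<bar>e * (y - x)\<bar> = e * \<bar>y - x\<bar>" using e0 by (simp add: abs_mult)
        ultimately show ?thesis using \<open>\<bar>g y - g x\<bar> \<le> B * \<bar>y - x\<bar>\<close> by linarith
      qed
      then show "norm (h y - h x) \<le> (B + e) * norm (y - x)" by (simp add: distrib_right)
    qed
  qed
  have "\<not> negligible {h a<..<h b}"
    using negligible_interval(2)[of "h a" "h b"] hab by (simp add: box_real)
  then obtain y where y: "y \<in> {h a<..<h b}" "y \<notin> h ` (N \<inter> {a..b})"
    using negh negligible_subset by blast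
  define C where "C = {a..b} \<inter> h -` {..y}"
  have closedC: "closed C" unfolding C_def
    by (rule continuous_closed_preimage[OF cont_h]) auto
  have aC: "a \<in> C" using y ab by (auto simp: C_def)
  have bddC: "bdd_above C" by (auto simp: C_def bdd_above_def)
  define s where "s = Sup C"
  have sC: "s \<in> C" unfolding s_def using closedC aC bddC closed_contains_Sup by blast
  have ub: "t \<le> s" if "t \<in> C" for t unfolding s_def using that bddC by (simp add: cSup_upper)
  have sab: "a \<le> s" "s \<le> b" "h s \<le> y" using sC by (auto simp: C_def)
  have after: "h t > y" if "t \<in> {s<..b}" for t
  proof (rule ccontr)
    assume "\<not> y < h t"
    then have "t \<in> C" using that sab by (auto simp: C_def)
    then show False using ub that by force
  qed
  have sb: "s < b" using sab y hab by (metis greaterThanLessThan_iff le_less not_le)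
  have hs: "h s = y"
  proof (rule ccontr)
    assume "h s \<noteq> y"
    then have lt: "h s < y" using sab by simp
    have "continuous (at s within {a..b}) h"
      using cont_h sab by (simp add: continuous_on_eq_continuous_within)
    then obtain d where d: "d > 0" "\<And>t. t \<in> {a..b} \<Longrightarrow> dist t s < d \<Longrightarrow> dist (h t) (h s) < y - h s"
      using lt unfolding continuous_within_eps_delta by (metis diff_gt_0_iff_gt)
    define t where "t = min b (s + d/2)"
    have t: "t \<in> {s<..b}" "t \<in> {a..b}" "dist t s < d" using d sb sab by (auto simp: t_def dist_real_def)
    have "h t < y" using d(2)[OF t(2,3)] by (simp add: dist_real_def)
    with after[OF t(1)] show False by simp
  qed
  have "s \<noteq> a" using hs y by auto
  then have s_in: "s \<in> {a<..<b}" using sab sb by auto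
  have "s \<notin> N" using y hs sab by auto
  from dini[OF s_in this e0] obtain t where t: "t \<in> {s<..b}" "g t - g s \<le> e * (t - s)" by blast
  have "h t \<le> h s" using t by (simp add: h_def algebra_simps)
  with after[OF t(1)] hs show False by simp
qed

definition calm :: "real set \<Rightarrow> (real \<Rightarrow> real) \<Rightarrow> real \<Rightarrow> bool" where
  "calm S f x \<longleftrightarrow> (\<exists>T B. open T \<and> x \<in> T \<and> (\<forall>y\<in>S\<inter>T. \<bar>f y - f x\<bar> \<le> B * \<bar>y - x\<bar>))"

lemma calm_const: "calm S (\<lambda>t. c) x"
  unfolding calm_def by (rule exI[of _ UNIV], rule exI[of _ 0]) auto

lemma calm_id: "calm S (\<lambda>t. t) x"
  unfolding calm_def by (rule exI[of _ UNIV], rule exI[of _ 1]) auto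

lemma calm_subset: "calm S f x \<Longrightarrow> S' \<subseteq> S \<Longrightarrow> calm S' f x"
  unfolding calm_def by blast

lemma calm_add:
  assumes "calm S f x" "calm S g x" shows "calm S (\<lambda>t. f t + g t) x"
proof -
  obtain T1 B1 where 1: "open T1" "x \<in> T1" "\<forall>y\<in>S\<inter>T1. \<bar>f y - f x\<bar> \<le> B1 * \<bar>y - x\<bar>"
    using assms(1) unfolding calm_def by blast
  obtain T2 B2 where 2: "open T2" "x \<in> T2" "\<forall>y\<in>S\<inter>T2. \<bar>g y - g x\<bar> \<le> B2 * \<bar>y - x\<bar>"
    using assms(2) unfolding calm_def by blast
  show ?thesis unfolding calm_def
  proof (intro exI conjI ballI)
    show "open (T1 \<inter> T2)" "x \<in> T1 \<inter> T2" using 1 2 by auto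
    fix y assume y: "y \<in> S \<inter> (T1 \<inter> T2)"
    then have "\<bar>f y - f x\<bar> \<le> B1 * \<bar>y - x\<bar>" "\<bar>g y - g x\<bar> \<le> B2 * \<bar>y - x\<bar>" using 1 2 by auto
    then show "\<bar>f y + g y - (f x + g x)\<bar> \<le> (B1 + B2) * \<bar>y - x\<bar>" by (simp add: distrib_right)
  qed
qed

lemma calm_minus:
  assumes "calm S f x" shows "calm S (\<lambda>t. - f t) x"
  using assms unfolding calm_def by (metis abs_minus_commute minus_diff_eq minus_diff_minus)

lemma calm_diff:
  assumes "calm S f x" "calm S g x" shows "calm S (\<lambda>t. f t - g t) x"
  using calm_add[OF assms(1) calm_minus[OF assms(2)]] by simp

lemma calm_max0:
  assumes "calm S f x" shows "calm S (\<lambda>t. max (f t) 0) x"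
proof -
  obtain T B where 1: "open T" "x \<in> T" "\<forall>y\<in>S\<inter>T. \<bar>f y - f x\<bar> \<le> B * \<bar>y - x\<bar>"
    using assms unfolding calm_def by blast
  have "\<bar>max (f y) 0 - max (f x) 0\<bar> \<le> \<bar>f y - f x\<bar>" for y by (simp add: max_def abs_if)
  then show ?thesis unfolding calm_def using 1 by (meson order_trans)
qed

lemma calm_mult:
  assumes "calm S f x" "calm S g x" shows "calm S (\<lambda>t. f t * g t) x"
proof -
  obtain T1 B1 where 1: "open T1" "x \<in> T1" "\<forall>y\<in>S\<inter>T1. \<bar>f y - f x\<bar> \<le> B1 * \<bar>y - x\<bar>"
    using assms(1) unfolding calm_def by blast
  obtain T2 B2 where 2: "open T2" "x \<in> T2" "\<forall>y\<in>S\<inter>T2. \<bar>g y - g x\<bar> \<le> B2 * \<bar>y - x\<bar>"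
    using assms(2) unfolding calm_def by blast
  show ?thesis unfolding calm_def
  proof (intro exI conjI ballI)
    show "open (T1 \<inter> T2 \<inter> ball x 1)" "x \<in> T1 \<inter> T2 \<inter> ball x 1" using 1 2 by auto
    fix y assume y: "y \<in> S \<inter> (T1 \<inter> T2 \<inter> ball x 1)"
    then have f: "\<bar>f y - f x\<bar> \<le> \<bar>B1\<bar> * \<bar>y - x\<bar>" and g: "\<bar>g y - g x\<bar> \<le> \<bar>B2\<bar> * \<bar>y - x\<bar>"
      using 1 2 by (auto intro: order_trans[OF _ mult_right_mono])
    have yx: "\<bar>y - x\<bar> \<le> 1" using y by (auto simp: dist_real_def)
    have "\<bar>f y - f x\<bar> \<le> \<bar>B1\<bar>" using f yx by (meson abs_ge_zero mult_left_le order_trans)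
    then have fy: "\<bar>f y\<bar> \<le> \<bar>f x\<bar> + \<bar>B1\<bar>" by linarith
    have "f y * g y - f x * g x = f y * (g y - g x) + g x * (f y - f x)" by (simp add: algebra_simps)
    then have "\<bar>f y * g y - f x * g x\<bar> \<le> \<bar>f y\<bar> * \<bar>g y - g x\<bar> + \<bar>g x\<bar> * \<bar>f y - f x\<bar>"
      by (metis abs_mult abs_triangle_ineq)
    also have "\<dots> \<le> (\<bar>f x\<bar> + \<bar>B1\<bar>) * (\<bar>B2\<bar> * \<bar>y - x\<bar>) + \<bar>g x\<bar> * (\<bar>B1\<bar> * \<bar>y - x\<bar>)"
      by (intro add_mono mult_mono f g fy) auto
    also have "\<dots> = ((\<bar>f x\<bar> + \<bar>B1\<bar>) * \<bar>B2\<bar> + \<bar>g x\<bar> * \<bar>B1\<bar>) * \<bar>y - x\<bar>" by (simp add: algebra_simps)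
    finally show "\<bar>f y * g y - f x * g x\<bar> \<le> ((\<bar>f x\<bar> + \<bar>B1\<bar>) * \<bar>B2\<bar> + \<bar>g x\<bar> * \<bar>B1\<bar>) * \<bar>y - x\<bar>" .
  qed
qed

lemma calm_cmult: "calm S f x \<Longrightarrow> calm S (\<lambda>t. c * f t) x"
  using calm_mult[OF calm_const] by blast

lemma calm_imp_cont:
  assumes "calm S f x" shows "continuous (at x within S) f"
proof -
  obtain T B where 1: "open T" "x \<in> T" "\<forall>y\<in>S\<inter>T. \<bar>f y - f x\<bar> \<le> B * \<bar>y - x\<bar>"
    using assms unfolding calm_def by blast
  obtain r where r: "r > 0" "ball x r \<subseteq> T" using 1 open_contains_ball by blast
  show ?thesis unfolding continuous_within_eps_delta
  proof (intro allI impI)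
    fix e :: real assume e: "e > 0"
    define d where "d = min r (e / (\<bar>B\<bar> + 1))"
    have d: "d > 0" using r e by (simp add: d_def)
    show "\<exists>d>0. \<forall>y\<in>S. dist y x < d \<longrightarrow> dist (f y) (f x) < e"
    proof (intro exI conjI ballI impI)
      show "d > 0" by fact
      fix y assume y: "y \<in> S" "dist y x < d"
      then have "y \<in> T" using r by (auto simp: d_def dist_commute)
      then have "\<bar>f y - f x\<bar> \<le> B * \<bar>y - x\<bar>" using 1 y by auto
      also have "\<dots> \<le> \<bar>B\<bar> * \<bar>y - x\<bar>" by (simp add: mult_right_mono)
      also have "\<dots> \<le> \<bar>B\<bar> * d" using y by (intro mult_left_mono) (auto simp: dist_real_def)
      also have "\<dots> < e"
      proof -
        have "\<bar>B\<bar> * d \<le> \<bar>B\<bar> * (e / (\<bar>B\<bar> + 1))" by (intro mult_left_mono) (auto simp: d_def)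
        also have "\<dots> < e" using e by (simp add: field_simps)
        finally show ?thesis .
      qed
      finally show "dist (f y) (f x) < e" by (simp add: dist_real_def)
    qed
  qed
qed

lemma calm_imp_cont_on: "(\<And>x. x \<in> S \<Longrightarrow> calm S f x) \<Longrightarrow> continuous_on S f"
  using calm_imp_cont continuous_on_eq_continuous_within by blast

lemma filippov_inner_le:
  assumes v: "v \<in> filippov_set X D x"
    and bnd: "\<And>e. e > 0 \<Longrightarrow> \<exists>\<epsilon>>0. \<forall>y\<in>cball x \<epsilon> \<inter> D. inner w (X y) \<le> c + e"
  shows "inner w v \<le> c"
proof (rule field_le_epsilon)
  fix e :: real assume "e > 0"
  then obtain \<epsilon> where \<epsilon>: "\<epsilon> > 0" "\<forall>y\<in>cball x \<epsilon> \<inter> D. inner w (X y) \<le> c + e" using bnd by blast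
  have 1: "\<forall>\<epsilon>'\<in>{0<..}. \<forall>N\<in>null_sets lebesgue. v \<in> closure (convex hull (X ` (cball x \<epsilon>' \<inter> D - N)))"
    using v by (simp add: filippov_set_def)
  have "{} \<in> null_sets lebesgue" by simp
  then have "v \<in> closure (convex hull (X ` ((cball x \<epsilon> \<inter> D) - {})))"
    using 1 \<epsilon>(1) by blast
  moreover have "closure (convex hull (X ` ((cball x \<epsilon> \<inter> D) - {}))) \<subseteq> {u. inner w u \<le> c + e}"
    by (intro closure_minimal hull_minimal closed_halfspace_le convex_halfspace_le) (use \<epsilon> in auto)
  ultimately show "inner w v \<le> c + e" by auto
qed

lemma inner4: "inner (w::real^4) u = w$1 * u$1 + w$2 * u$2 + w$3 * u$3 + w$4 * u$4"
  by (simp add: inner_vec_def sum_4)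

lemma filippov_nth_eq:
  assumes v: "v \<in> filippov_set X D x" and cont: "continuous (at x within D) (\<lambda>y. X y $ i)"
  shows "v $ i = X x $ i"
proof -
  have bnd: "\<exists>\<epsilon>>0. \<forall>y\<in>cball x \<epsilon> \<inter> D. \<bar>X y $ i - X x $ i\<bar> \<le> e" if "e > 0" for e
  proof -
    obtain d where d: "d > 0" "\<forall>y\<in>D. dist y x < d \<longrightarrow> dist (X y $ i) (X x $ i) < e"
      using cont \<open>e > 0\<close> unfolding continuous_within_eps_delta by blast
    show ?thesis
      by (rule exI[of _ "d/2"]) (use d in \<open>auto simp: dist_real_def dist_commute less_imp_le\<close>)
  qed
  have "inner (axis i 1) v \<le> X x $ i"
  proof (rule filippov_inner_le[OF v])
    fix e :: real assume "e > 0"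
    then obtain \<epsilon> where ep: "\<epsilon> > 0" "\<forall>y\<in>cball x \<epsilon> \<inter> D. \<bar>X y $ i - X x $ i\<bar> \<le> e" using bnd by blast
    show "\<exists>\<epsilon>>0. \<forall>y\<in>cball x \<epsilon> \<inter> D. inner (axis i 1) (X y) \<le> X x $ i + e"
    proof (intro exI[of _ \<epsilon>] conjI ballI)
      show "\<epsilon> > 0" by fact
      fix y assume "y \<in> cball x \<epsilon> \<inter> D"
      with ep have "\<bar>X y $ i - X x $ i\<bar> \<le> e" by blast
      then show "inner (axis i 1) (X y) \<le> X x $ i + e" by (simp add: inner_axis' abs_le_iff)
    qed
  qed
  moreover have "inner (axis i (-1)) v \<le> - X x $ i"
  proof (rule filippov_inner_le[OF v])
    fix e :: real assume "e > 0"
    then obtain \<epsilon> where ep: "\<epsilon> > 0" "\<forall>y\<in>cball x \<epsilon> \<inter> D. \<bar>X y $ i - X x $ i\<bar> \<le> e" using bnd by blast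
    show "\<exists>\<epsilon>>0. \<forall>y\<in>cball x \<epsilon> \<inter> D. inner (axis i (-1)) (X y) \<le> - X x $ i + e"
    proof (intro exI[of _ \<epsilon>] conjI ballI)
      show "\<epsilon> > 0" by fact
      fix y assume "y \<in> cball x \<epsilon> \<inter> D"
      with ep have "\<bar>X y $ i - X x $ i\<bar> \<le> e" by blast
      then show "inner (axis i (-1)) (X y) \<le> - X x $ i + e" by (simp add: inner_axis' abs_le_iff)
    qed
  qed
  ultimately show ?thesis by (simp add: inner_axis')
qed

lemma vd_nth:
  assumes "(z has_vector_derivative v) (at s)"
  shows "((\<lambda>t. z t $ i) has_real_derivative v $ i) (at s)"
proof -
  have "(z has_derivative (\<lambda>x. x *\<^sub>R v)) (at s)" using assms by (simp add: has_vector_derivative_def)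
  from bounded_linear.has_derivative[OF bounded_linear_vec_nth this, of i]
  have "((\<lambda>t. z t $ i) has_derivative (\<lambda>x. x * v $ i)) (at s)" by simp
  moreover have "(\<lambda>x. x * v $ i) = (*) (v $ i)" by (rule ext) simp
  ultimately show ?thesis unfolding has_field_derivative_def by metis
qed

lemma deriv_right_le:
  assumes "(p has_real_derivative d) (at s)" "e > 0"
  shows "eventually (\<lambda>t. p t - p s \<le> (d + e) * (t - s)) (at_right s)"
proof -
  have "((\<lambda>y. (p y - p s) / (y - s)) \<longlongrightarrow> d) (at s)"
    using assms(1) by (simp add: has_field_derivative_iff)
  then have "((\<lambda>y. (p y - p s) / (y - s)) \<longlongrightarrow> d) (at_right s)"
    by (rule tendsto_mono[OF at_le, rotated]) simp
  then have "eventually (\<lambda>y. (p y - p s) / (y - s) < d + e) (at_right s)"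
    using assms(2) by (intro order_tendstoD(2)) auto
  moreover have "eventually (\<lambda>y. s < y) (at_right s)" by (simp add: eventually_at_right_less)
  ultimately show ?thesis
    by eventually_elim (simp add: pos_divide_less_eq less_imp_le)
qed

lemma pos_right_le:
  assumes der: "(p has_real_derivative d) (at s)" and bd: "p s \<ge> 0 \<Longrightarrow> d \<le> B" and B: "B \<ge> 0" and e: "e > 0"
  shows "eventually (\<lambda>t. max (p t) 0 - max (p s) 0 \<le> (B + e) * (t - s)) (at_right s)"
proof (cases "p s < 0")
  case True
  have "isCont p s" using der by (rule DERIV_isCont)
  then have "eventually (\<lambda>t. p t < 0) (at s)"
    using order_tendstoD(2)[OF \<open>isCont p s\<close>[unfolded isCont_def] True] by simp
  then have "eventually (\<lambda>t. p t < 0) (at_right s)" by (rule filter_leD[OF at_le, rotated]) simp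
  moreover have "eventually (\<lambda>y. s < y) (at_right s)" by (simp add: eventually_at_right_less)
  ultimately show ?thesis
    by eventually_elim (use True B e in \<open>auto intro!: mult_nonneg_nonneg\<close>)
next
  case False
  then have "d \<le> B" using bd by simp
  have "eventually (\<lambda>t. p t - p s \<le> (d + e) * (t - s)) (at_right s)" by (rule deriv_right_le[OF der e])
  moreover have "eventually (\<lambda>y. s < y) (at_right s)" by (simp add: eventually_at_right_less)
  ultimately show ?thesis
  proof eventually_elim
    case (elim t)
    have h1: "(d + e) * (t - s) \<le> (B + e) * (t - s)" using \<open>d \<le> B\<close> elim by (intro mult_right_mono) auto
    have h2: "0 \<le> (B + e) * (t - s)" using B e elim by auto
    show ?case
    proof (cases "p t \<le> 0")
      case True then show ?thesis using False h2 by simp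
    next
      case False2: False
      then have "max (p t) 0 - max (p s) 0 = p t - p s" using False by simp
      then show ?thesis using h1 elim by linarith
    qed
  qed
qed

lemma gronwall_zero:
  fixes W :: "real \<Rightarrow> real"
  assumes ab: "a \<le> b" and calmW: "\<And>t. t \<in> {a..b} \<Longrightarrow> calm {a..b} W t"
    and pos: "\<And>t. t \<in> {a..b} \<Longrightarrow> W t \<ge> 0" and Wa: "W a = 0" and L: "L \<ge> 0" "L * (b - a) < 1"
    and negN: "negligible N"
    and ev: "\<And>s e. s \<in> {a<..<b} \<Longrightarrow> s \<notin> N \<Longrightarrow> e > 0 \<Longrightarrow>
              eventually (\<lambda>t. W t - W s \<le> (L * W s + e) * (t - s)) (at_right s)"
  shows "\<And>t. t \<in> {a..b} \<Longrightarrow> W t = 0"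
proof -
  have cont: "continuous_on {a..b} W" by (rule calm_imp_cont_on) (use calmW in auto)
  obtain t1 where t1: "t1 \<in> {a..b}" "\<And>t. t \<in> {a..b} \<Longrightarrow> W t \<le> W t1"
    using continuous_attains_sup[OF compact_Icc _ cont] ab by auto
  define Mx where "Mx = W t1"
  have Mx0: "Mx \<ge> 0" using pos t1 by (simp add: Mx_def)
  define g where "g t = W t - L * Mx * (t - a)" for t
  have "g t1 \<le> g a"
  proof (rule dini_mono[where g=g and a=a and b=t1 and N = N])
    show "a \<le> t1" using t1 by simp
    have calmg: "calm {a..t1} g x" if "x \<in> {a..t1}" for x
    proof -
      have "calm {a..b} g x" unfolding g_def
        by (intro calm_diff calm_cmult calm_id calm_const calmW) (use that t1 in auto)
      then show ?thesis by (rule calm_subset) (use t1 in auto)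
    qed
    show "continuous_on {a..t1} g" by (rule calm_imp_cont_on[OF calmg])
    show "negligible N" by fact
    show "\<exists>T B. open T \<and> x \<in> T \<and> (\<forall>y\<in>{a..t1} \<inter> T. \<bar>g y - g x\<bar> \<le> B * \<bar>y - x\<bar>)"
      if "x \<in> N" "x \<in> {a..t1}" for x using calmg[OF that(2)] unfolding calm_def by blast
    fix s e :: real assume s: "s \<in> {a<..<t1}" "s \<notin> N" "e > 0"
    have sab: "s \<in> {a<..<b}" using s t1 by auto
    have "eventually (\<lambda>t. W t - W s \<le> (L * W s + e) * (t - s)) (at_right s)" by (rule ev[OF sab s(2,3)])
    then obtain b' where b': "b' > s" "\<And>y. s < y \<Longrightarrow> y < b' \<Longrightarrow> W y - W s \<le> (L * W s + e) * (y - s)"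
      unfolding eventually_at_right_field by blast
    define t where "t = (s + min b' t1) / 2"
    have t: "s < t" "t < b'" "t \<le> t1" using b' s by (auto simp: t_def)
    have Wt: "W t - W s \<le> (L * W s + e) * (t - s)" using b'(2) t by auto
    have "W s \<le> Mx" using t1 sab by (simp add: Mx_def)
    then have "(L * W s + e) * (t - s) \<le> (L * Mx + e) * (t - s)"
      using t L by (intro mult_right_mono add_right_mono mult_left_mono) auto
    with Wt have "g t - g s \<le> e * (t - s)" by (simp add: g_def algebra_simps)
    then show "\<exists>t\<in>{s<..t1}. g t - g s \<le> e * (t - s)" using t by auto
  qed
  then have "Mx * (1 - L * (t1 - a)) \<le> 0" using Wa by (simp add: g_def Mx_def algebra_simps)
  moreover have "L * (t1 - a) \<le> L * (b - a)" using t1 L by (intro mult_left_mono) auto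
  ultimately have "Mx \<le> 0" using L(2) by (smt (verit) mult_le_0_iff)
  then show "\<And>t. t \<in> {a..b} \<Longrightarrow> W t = 0" using t1 pos Mx_def by force
qed




lemma ev_exists:
  assumes "eventually P (at_right (s::real))" "s < b"
  shows "\<exists>t\<in>{s<..b}. P t"
proof -
  obtain b' where b': "b' > s" "\<And>y. s < y \<Longrightarrow> y < b' \<Longrightarrow> P y"
    using assms(1) unfolding eventually_at_right_field by blast
  define t where "t = (s + min b' b) / 2"
  have "s < t" "t < b'" "t \<le> b" using b' assms(2) by (auto simp: t_def)
  moreover have "P t" using b' \<open>s < t\<close> \<open>t < b'\<close> by blast
  ultimately show ?thesis by auto
qed

lemma ev_from_deriv:
  assumes "(p has_real_derivative d) (at s)" "d \<le> B" "e > 0"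
  shows "eventually (\<lambda>t. p t - p s \<le> (B + e) * (t - s)) (at_right s)"
proof -
  have "eventually (\<lambda>t. p t - p s \<le> (d + e) * (t - s)) (at_right s)" by (rule deriv_right_le[OF assms(1,3)])
  moreover have "eventually (\<lambda>y. s < y) (at_right s)" by (simp add: eventually_at_right_less)
  ultimately show ?thesis
  proof eventually_elim
    case (elim t)
    have "(d + e) * (t - s) \<le> (B + e) * (t - s)" using assms(2) elim by (intro mult_right_mono) auto
    then show ?case using elim by linarith
  qed
qed

lemma deriv_calm:
  assumes "(f has_real_derivative d) (at x)" shows "calm S f x"
proof -
  have "((\<lambda>y. (f y - f x) / (y - x)) \<longlongrightarrow> d) (at x)" using assms by (simp add: has_field_derivative_iff)
  then have "eventually (\<lambda>y. dist ((f y - f x) / (y - x)) d < 1) (at x)"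
    by (rule tendstoD) simp
  then obtain T where T: "open T" "x \<in> T" "\<And>y. y \<in> T \<Longrightarrow> y \<noteq> x \<Longrightarrow> dist ((f y - f x) / (y - x)) d < 1"
    unfolding eventually_at_topological by blast
  show ?thesis unfolding calm_def
  proof (intro exI conjI ballI)
    show "open T" "x \<in> T" by fact+
    fix y assume y: "y \<in> S \<inter> T"
    show "\<bar>f y - f x\<bar> \<le> (\<bar>d\<bar> + 1) * \<bar>y - x\<bar>"
    proof (cases "y = x")
      case False
      then have "\<bar>(f y - f x) / (y - x) - d\<bar> < 1" using T y by (auto simp: dist_real_def)
      then have "\<bar>(f y - f x) / (y - x)\<bar> \<le> \<bar>d\<bar> + 1" by linarith
      then show ?thesis using False by (simp add: abs_divide divide_le_eq)
    qed simp
  qed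
qed

lemma calm_divc: "calm S f x \<Longrightarrow> calm S (\<lambda>t. f t / c) x"
  using calm_cmult[of S f x "1/c"] by simp

lemma Dp_iff: "y \<in> Dp \<longleftrightarrow> 0 \<le> y$1 \<and> 0 \<le> y$2 \<and> 0 \<le> y$3 \<and> 0 \<le> y$4"
  unfolding Dp_def using forall_4[of "\<lambda>i. 0 \<le> y $ i"] by simp

locale sys =
  fixes \<beta>E \<nu>E \<delta>E \<delta>M \<delta>F \<delta>s K \<nu> \<gamma>s k \<kappa> :: real
  assumes pos: "\<beta>E > 0" "\<nu>E > 0" "\<delta>E > 0" "\<delta>M > 0" "\<delta>F > 0" "\<delta>s > 0" "K > 0"
    and nu: "0 < \<nu>" "\<nu> < 1" and gam: "0 < \<gamma>s" "\<gamma>s \<le> 1" and dsM: "\<delta>s \<ge> \<delta>M"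
    and R0: "\<beta>E * \<nu> * \<nu>E / (\<delta>F * (\<nu>E + \<delta>E)) > 1"
    and k_lo: "(\<beta>E * \<nu> * \<nu>E - (\<nu>E + \<delta>E) * \<delta>F)
                / (\<beta>E * \<nu> * \<nu>E - (1 - \<gamma>s) * (\<nu>E + \<delta>E) * \<delta>F) * \<delta>s < k"
    and k_hi: "k < \<delta>s"
    and kap: "\<kappa> > 0"
    and kap_lo: "(\<delta>s - k) / k \<le> \<kappa>"
    and kap_hi: "\<kappa> < \<gamma>s * \<delta>F * (\<nu>E + \<delta>E) / (\<beta>E * \<nu> * \<nu>E - \<delta>F * (\<nu>E + \<delta>E))"
begin

abbreviation "X \<equiv> closed_loop \<beta>E \<nu>E \<delta>E \<delta>M \<delta>F \<delta>s K \<nu> \<gamma>s k"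
abbreviation "MK \<equiv> Mset \<beta>E \<nu>E \<delta>E \<delta>M K \<nu> \<kappa>"

lemma X_simps:
  "X y $ 1 = \<beta>E * y$3 * (1 - y$1 / K) - (\<nu>E + \<delta>E) * y$1"
  "X y $ 2 = (1 - \<nu>) * \<nu>E * y$1 - \<delta>M * y$2"
  "X y $ 3 = \<nu> * \<nu>E * y$1 * (y$2 / (y$2 + \<gamma>s * y$4)) - \<delta>F * y$3"
  "X y $ 4 = k * (y$2 + y$4) - \<delta>s * y$4"
  by (simp_all add: closed_loop_def Let_def)

definition "aF y = \<beta>E * y$3 * (1 - y$1 / K) - (\<nu>E + \<delta>E) * y$1"
definition "bF (y::real^4) = y$2 - \<kappa> * y$4"
definition "cF (y::real^4) = (1 - \<nu>) * \<nu>E * y$1 - \<delta>M * y$2"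

lemma MK_iff: "y \<in> MK \<longleftrightarrow> y \<in> Dp \<and> aF y \<le> 0 \<and> bF y \<le> 0 \<and> cF y \<le> 0"
  by (auto simp: Mset_def T1_def T2_def T3_def aF_def bF_def cF_def)

lemma D_pos: "\<beta>E * \<nu> * \<nu>E - \<delta>F * (\<nu>E + \<delta>E) > 0"
proof -
  have "\<delta>F * (\<nu>E + \<delta>E) > 0" using pos by simp
  then have "\<delta>F * (\<nu>E + \<delta>E) < \<beta>E * \<nu> * \<nu>E" using R0 by (simp add: less_divide_eq)
  then show ?thesis by simp
qed

lemma H2: "\<beta>E * \<nu> * \<nu>E * \<kappa> < \<delta>F * (\<nu>E + \<delta>E) * (\<kappa> + \<gamma>s)"
proof -
  have "\<kappa> * (\<beta>E * \<nu> * \<nu>E - \<delta>F * (\<nu>E + \<delta>E)) < \<gamma>s * \<delta>F * (\<nu>E + \<delta>E)"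
    using kap_hi D_pos by (simp add: pos_less_divide_eq)
  then show ?thesis by (simp add: algebra_simps)
qed

lemma k_pos: "k > 0"
proof -
  have num: "\<beta>E * \<nu> * \<nu>E - (\<nu>E + \<delta>E) * \<delta>F > 0" using D_pos by (simp add: mult.commute)
  have "(1 - \<gamma>s) * (\<nu>E + \<delta>E) * \<delta>F \<le> (\<nu>E + \<delta>E) * \<delta>F"
    using gam pos by (simp add: mult_le_cancel_right1 mult.assoc)
  then have den: "\<beta>E * \<nu> * \<nu>E - (1 - \<gamma>s) * (\<nu>E + \<delta>E) * \<delta>F > 0" using num by linarith
  have "0 < (\<beta>E * \<nu> * \<nu>E - (\<nu>E + \<delta>E) * \<delta>F)
                / (\<beta>E * \<nu> * \<nu>E - (1 - \<gamma>s) * (\<nu>E + \<delta>E) * \<delta>F) * \<delta>s"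
    using num den pos by simp
  then show ?thesis using k_lo by linarith
qed

lemma H4: "\<delta>s - k \<le> \<kappa> * k"
  using kap_lo k_pos by (simp add: divide_le_eq)

lemma ratio_bounds:
  assumes "y \<in> Dp" shows "0 \<le> y$2 / (y$2 + \<gamma>s * y$4)" "y$2 / (y$2 + \<gamma>s * y$4) \<le> 1"
  using assms gam by (auto simp: Dp_iff divide_le_eq_1)

lemma lin_bound:
  assumes y: "y \<in> Dp" and w: "w1 \<ge> 0" "w2 \<ge> 0" "w3 \<ge> 0" "w4 \<ge> 0"
  shows "w1 * X y $ 1 + w2 * X y $ 2 + w3 * X y $ 3 + w4 * X y $ 4
         \<le> (w1 * \<beta>E + w2 * \<nu>E + w3 * \<nu>E + w4 * k) * (y$1 + y$2 + y$3 + y$4)"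
proof -
  have y0: "0 \<le> y$1" "0 \<le> y$2" "0 \<le> y$3" "0 \<le> y$4" using y by (auto simp: Dp_iff)
  let ?r = "y$2 / (y$2 + \<gamma>s * y$4)"
  have r: "0 \<le> ?r" "?r \<le> 1" using ratio_bounds[OF y] by auto
  have x1: "X y $ 1 \<le> \<beta>E * y$3"
  proof -
    have "\<beta>E * y$3 * (y$1 / K) \<ge> 0" using pos y0 by simp
    then show ?thesis unfolding X_simps using pos y0 by (simp add: algebra_simps)
  qed
  have x2: "X y $ 2 \<le> \<nu>E * y$1"
  proof -
    have "(1 - \<nu>) * (\<nu>E * y$1) \<le> \<nu>E * y$1" using nu pos y0 by (intro mult_left_le_one_le) auto
    moreover have "\<delta>M * y$2 \<ge> 0" using pos y0 by simp
    ultimately show ?thesis unfolding X_simps by (simp add: mult.assoc)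
  qed
  have x3: "X y $ 3 \<le> \<nu>E * y$1"
  proof -
    have "\<nu> * \<nu>E * y$1 * ?r \<le> \<nu> * \<nu>E * y$1" by (rule mult_left_le) (use r nu pos y0 in auto)
    also have "\<dots> \<le> \<nu>E * y$1" using nu pos y0 by (simp add: mult_left_le_one_le)
    finally have h: "\<nu> * \<nu>E * y$1 * ?r \<le> \<nu>E * y$1" .
    have "\<delta>F * y$3 \<ge> 0" using pos y0 by simp
    then show ?thesis unfolding X_simps using h by linarith
  qed
  have x4: "X y $ 4 \<le> k * y$2 + k * y$4" unfolding X_simps using pos y0 k_pos k_hi
    by (simp add: algebra_simps)
  have "w1 * X y $ 1 + w2 * X y $ 2 + w3 * X y $ 3 + w4 * X y $ 4
        \<le> w1 * (\<beta>E * y$3) + w2 * (\<nu>E * y$1) + w3 * (\<nu>E * y$1) + w4 * (k * y$2 + k * y$4)"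
    by (intro add_mono mult_left_mono x1 x2 x3 x4 w)
  also have "\<dots> = (w1 * \<beta>E) * y$3 + (w2 * \<nu>E + w3 * \<nu>E) * y$1 + (w4 * k) * (y$2 + y$4)"
    by (simp add: algebra_simps)
  also have "\<dots> \<le> (w1 * \<beta>E) * (y$1 + y$2 + y$3 + y$4) + (w2 * \<nu>E + w3 * \<nu>E) * (y$1 + y$2 + y$3 + y$4)
      + (w4 * k) * (y$1 + y$2 + y$3 + y$4)"
    using w y0 pos k_pos by (intro add_mono mult_left_mono) auto
  also have "\<dots> = (w1 * \<beta>E + w2 * \<nu>E + w3 * \<nu>E + w4 * k) * (y$1 + y$2 + y$3 + y$4)"
    by (simp add: algebra_simps)
  finally show ?thesis .
qed

end



lemma isCont_nth4 [continuous_intros]: "isCont (\<lambda>y::real^4. y $ i) x"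
  by (rule isCont_vec_nth) (rule continuous_ident)

context sys begin

lemma sol_D: "filippov_solution X Dp z \<Longrightarrow> t \<ge> 0 \<Longrightarrow> z t \<in> Dp"
  by (simp add: filippov_solution_def)

lemma sol_calm:
  assumes "filippov_solution X Dp z" "t \<ge> 0" shows "calm {0..} (\<lambda>s. z s $ i) t"
proof -
  obtain \<delta> L where dl: "\<delta> > 0" "L-lipschitz_on (cball t \<delta> \<inter> {0..}) z"
    using assms unfolding filippov_solution_def by blast
  show ?thesis unfolding calm_def
  proof (intro exI conjI ballI)
    show "open (ball t \<delta>)" "t \<in> ball t \<delta>" using dl by auto
    fix y assume y: "y \<in> {0..} \<inter> ball t \<delta>"
    have "dist (z y) (z t) \<le> L * dist y t"
      by (rule lipschitz_onD[OF dl(2)]) (use y assms(2) dl in \<open>auto simp: dist_commute\<close>)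
    moreover have "\<bar>z y $ i - z t $ i\<bar> \<le> dist (z y) (z t)"
      using component_le_norm_cart[of "z y - z t" i] by (simp add: dist_norm)
    ultimately show "\<bar>z y $ i - z t $ i\<bar> \<le> L * \<bar>y - t\<bar>" by (simp add: dist_real_def)
  qed
qed

lemma sol_ae:
  assumes "filippov_solution X Dp z"
  obtains N where "negligible N"
    "\<And>s. 0 < s \<Longrightarrow> s \<notin> N \<Longrightarrow> \<exists>v. (z has_vector_derivative v) (at s) \<and> v \<in> filippov_set X Dp (z s)"
proof -
  have "AE t in lborel. 0 < t \<longrightarrow> (\<exists>v. (z has_vector_derivative v) (at t) \<and> v \<in> filippov_set X Dp (z t))"
    using assms unfolding filippov_solution_def by blast
  then obtain N where N: "{x \<in> space lborel. \<not> (0 < x \<longrightarrow> (\<exists>v. (z has_vector_derivative v) (at x) \<and> v \<in> filippov_set X Dp (z x)))} \<subseteq> N"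
    "emeasure lborel N = 0" "N \<in> sets lborel"
    by (rule AE_E)
  have "N \<in> null_sets lborel" using N by auto
  then have "negligible N" by (simp add: negligible_iff_null_sets null_sets_completionI)
  moreover have "\<And>s. 0 < s \<Longrightarrow> s \<notin> N \<Longrightarrow> \<exists>v. (z has_vector_derivative v) (at s) \<and> v \<in> filippov_set X Dp (z s)"
    using N(1) by auto
  ultimately show ?thesis using that by blast
qed

lemma fil_lin:
  assumes v: "v \<in> filippov_set X Dp x" and w: "w1 \<ge> 0" "w2 \<ge> 0" "w3 \<ge> 0" "w4 \<ge> 0"
  shows "w1 * v$1 + w2 * v$2 + w3 * v$3 + w4 * v$4
         \<le> (w1 * \<beta>E + w2 * \<nu>E + w3 * \<nu>E + w4 * k) * (x$1 + x$2 + x$3 + x$4)"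
proof -
  define Bw where "Bw = w1 * \<beta>E + w2 * \<nu>E + w3 * \<nu>E + w4 * k"
  have Bw: "Bw \<ge> 0" using w pos k_pos by (simp add: Bw_def)
  define ww :: "real^4" where "ww = vector [w1, w2, w3, w4]"
  have "inner ww v \<le> Bw * (x$1 + x$2 + x$3 + x$4)"
  proof (rule filippov_inner_le[OF v])
    fix e :: real assume e: "e > 0"
    define \<epsilon> where "\<epsilon> = e / (4 * Bw + 1)"
    have \<epsilon>: "\<epsilon> > 0" using e Bw by (simp add: \<epsilon>_def)
    have Bwe: "Bw * (4 * \<epsilon>) \<le> e"
    proof -
      have "Bw * (4 * \<epsilon>) = e * (4 * Bw) / (4 * Bw + 1)" by (simp add: \<epsilon>_def field_simps)
      also have "\<dots> \<le> e" using e Bw by (simp add: divide_le_eq)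
      finally show ?thesis .
    qed
    show "\<exists>\<epsilon>>0. \<forall>y\<in>cball x \<epsilon> \<inter> Dp. inner ww (X y) \<le> Bw * (x$1 + x$2 + x$3 + x$4) + e"
    proof (intro exI[of _ \<epsilon>] conjI ballI)
      show "\<epsilon> > 0" by fact
      fix y assume y: "y \<in> cball x \<epsilon> \<inter> Dp"
      have cmp: "y$i \<le> x$i + \<epsilon>" for i
      proof -
        have "\<bar>(y - x)$i\<bar> \<le> norm (y - x)" by (rule component_le_norm_cart)
        also have "norm (y - x) \<le> \<epsilon>" using y by (simp add: dist_norm norm_minus_commute)
        finally show ?thesis by simp
      qed
      have "inner ww (X y) \<le> Bw * (y$1 + y$2 + y$3 + y$4)"
        using lin_bound[of y w1 w2 w3 w4] y w by (simp add: inner4 ww_def Bw_def)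
      also have "\<dots> \<le> Bw * (x$1 + x$2 + x$3 + x$4 + 4 * \<epsilon>)"
        using cmp[of 1] cmp[of 2] cmp[of 3] cmp[of 4] Bw by (intro mult_left_mono) auto
      also have "\<dots> \<le> Bw * (x$1 + x$2 + x$3 + x$4) + e" using Bwe by (simp add: distrib_left)
      finally show "inner ww (X y) \<le> Bw * (x$1 + x$2 + x$3 + x$4) + e" .
    qed
  qed
  then show ?thesis by (simp add: inner4 ww_def Bw_def)
qed

lemma isCont_X:
  assumes "x$2 + \<gamma>s * x$4 \<noteq> 0" shows "isCont (\<lambda>y. X y $ i) x"
proof -
  have "i = 1 \<or> i = 2 \<or> i = 3 \<or> i = 4" by (rule exhaust_4)
  then show ?thesis
  proof (elim disjE)
    assume i: "i = 1" show ?thesis by (simp only: i X_simps) (intro continuous_intros, use pos in simp)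
  next
    assume i: "i = 2" show ?thesis by (simp only: i X_simps) (intro continuous_intros)
  next
    assume i: "i = 3" show ?thesis by (simp only: i X_simps) (intro continuous_intros, use assms in simp)
  next
    assume i: "i = 4" show ?thesis by (simp only: i X_simps) (intro continuous_intros)
  qed
qed

lemma filX:
  assumes "v \<in> filippov_set X Dp x" "x$2 + \<gamma>s * x$4 \<noteq> 0" shows "v $ i = X x $ i"
  by (rule filippov_nth_eq[OF assms(1)]) (rule continuous_at_imp_continuous_at_within[OF isCont_X[OF assms(2)]])

end



lemma vec4_eqI: "(y::real^4)$1 = 0 \<Longrightarrow> y$2 = 0 \<Longrightarrow> y$3 = 0 \<Longrightarrow> y$4 = 0 \<Longrightarrow> y = 0"
  unfolding vec_eq_iff using forall_4 by auto

context sys begin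

lemma zero_step:
  assumes sol: "filippov_solution X Dp z" and N: "negligible N"
    and Nd: "\<And>s. 0 < s \<Longrightarrow> s \<notin> N \<Longrightarrow> \<exists>v. (z has_vector_derivative v) (at s) \<and> v \<in> filippov_set X Dp (z s)"
    and a: "a \<ge> 0" "z a = 0"
  shows "\<And>t. t \<in> {a..a + 1 / (2 * (\<beta>E + \<nu>E + \<nu>E + k))} \<Longrightarrow> z t = 0"
proof -
  define C where "C = \<beta>E + \<nu>E + \<nu>E + k"
  have C: "C > 0" using pos k_pos by (simp add: C_def)
  define h where "h = 1 / (2 * C)"
  have h: "h > 0" using C by (simp add: h_def)
  define S1 where "S1 t = z t $ 1 + z t $ 2 + z t $ 3 + z t $ 4" for t
  have S1pos: "S1 t \<ge> 0" if "t \<ge> 0" for t using sol_D[OF sol that] by (simp add: S1_def Dp_iff)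
  have zero: "S1 t = 0" if "t \<in> {a..a+h}" for t
  proof (rule gronwall_zero[of a "a+h" S1 C N])
    show "a \<le> a + h" using h by simp
    show "calm {a..a + h} S1 t" if "t \<in> {a..a+h}" for t
    proof -
      have "calm {0..} S1 t" unfolding S1_def using that a
        by (intro calm_add sol_calm[OF sol]) auto
      then show ?thesis by (rule calm_subset) (use a in auto)
    qed
    show "S1 t \<ge> 0" if "t \<in> {a..a+h}" for t using S1pos that a by auto
    show "S1 a = 0" using a by (simp add: S1_def)
    show "0 \<le> C" using C by simp
    show "C * (a + h - a) < 1" using C by (simp add: h_def)
    show "negligible N" by fact
    fix s e :: real assume s: "s \<in> {a<..<a+h}" "s \<notin> N" "e > 0"
    obtain v where v: "(z has_vector_derivative v) (at s)" "v \<in> filippov_set X Dp (z s)"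
      using Nd[of s] s a by auto
    have der: "(S1 has_real_derivative v$1 + v$2 + v$3 + v$4) (at s)"
      unfolding S1_def by (intro DERIV_add vd_nth[OF v(1)])
    have "1 * v$1 + 1 * v$2 + 1 * v$3 + 1 * v$4 \<le> (1 * \<beta>E + 1 * \<nu>E + 1 * \<nu>E + 1 * k) * (z s$1 + z s$2 + z s$3 + z s$4)"
      by (rule fil_lin[OF v(2)]) auto
    then have "v$1 + v$2 + v$3 + v$4 \<le> C * S1 s" by (simp add: C_def S1_def)
    from ev_from_deriv[OF der this s(3)]
    show "eventually (\<lambda>t. S1 t - S1 s \<le> (C * S1 s + e) * (t - s)) (at_right s)" .
  qed (use that in auto)
  fix t assume t: "t \<in> {a..a + 1 / (2 * (\<beta>E + \<nu>E + \<nu>E + k))}"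
  then have "S1 t = 0" using zero by (simp add: h_def C_def)
  moreover have "0 \<le> z t $ 1" "0 \<le> z t $ 2" "0 \<le> z t $ 3" "0 \<le> z t $ 4"
    using sol_D[OF sol, of t] t a by (auto simp: Dp_iff)
  ultimately show "z t = 0" by (intro vec4_eqI) (simp_all add: S1_def)
qed

lemma zero_stays:
  assumes sol: "filippov_solution X Dp z" and t0: "t0 \<ge> 0" "z t0 = 0" and t: "t \<ge> t0"
  shows "z t = 0"
proof -
  obtain N where N: "negligible N"
    "\<And>s. 0 < s \<Longrightarrow> s \<notin> N \<Longrightarrow> \<exists>v. (z has_vector_derivative v) (at s) \<and> v \<in> filippov_set X Dp (z s)"
    using sol_ae[OF sol] by blast
  define h where "h = 1 / (2 * (\<beta>E + \<nu>E + \<nu>E + k))"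
  have h: "h > 0" using pos k_pos by (simp add: h_def)
  have ind: "\<forall>t\<in>{t0..t0 + real n * h}. z t = 0" for n :: nat
  proof (induction n)
    case 0 then show ?case using t0 by simp
  next
    case (Suc n)
    have za: "z (t0 + real n * h) = 0" using Suc h by auto
    have "z t = 0" if "t \<in> {t0 + real n * h .. t0 + real n * h + h}" for t
      using zero_step[OF sol N(1) N(2) _ za] that t0 h unfolding h_def by auto
    then show ?case using Suc by (auto simp: algebra_simps)
  qed
  define n where "n = nat \<lceil>(t - t0) / h\<rceil>"
  have "(t - t0) / h \<le> real n" unfolding n_def by linarith
  then have "t \<le> t0 + real n * h" using h by (simp add: divide_le_eq algebra_simps)
  then show ?thesis using ind[of n] t by auto
qed

end



context sys begin

lemma r_le:
  assumes "0 \<le> M" "0 \<le> Ms" "M + \<gamma>s * Ms > 0"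
  shows "M / (M + \<gamma>s * Ms) \<le> \<kappa> / (\<kappa> + \<gamma>s) + max (M - \<kappa> * Ms) 0 / (M + \<gamma>s * Ms)"
proof -
  define u where "u = M - max (M - \<kappa> * Ms) 0"
  have u1: "u \<le> M" "u \<le> \<kappa> * Ms" by (auto simp: u_def max_def)
  have "\<kappa> * u \<le> \<kappa> * M" using u1 kap by (intro mult_left_mono) auto
  moreover have "\<gamma>s * u \<le> \<gamma>s * (\<kappa> * Ms)" using u1 gam by (intro mult_left_mono) auto
  ultimately have "u * (\<kappa> + \<gamma>s) \<le> \<kappa> * (M + \<gamma>s * Ms)" by (simp add: algebra_simps)
  then have "u / (M + \<gamma>s * Ms) \<le> \<kappa> / (\<kappa> + \<gamma>s)"
    using assms(3) kap gam by (simp add: divide_simps mult.commute)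
  moreover have "M / (M + \<gamma>s * Ms) = u / (M + \<gamma>s * Ms) + max (M - \<kappa> * Ms) 0 / (M + \<gamma>s * Ms)"
    by (simp add: u_def add_divide_distrib[symmetric])
  ultimately show ?thesis by linarith
qed

lemma a_alg:
  assumes nn: "0 \<le> E" "0 \<le> M" "0 \<le> F" "0 \<le> Ms" and m0: "m0 > 0" "M + \<gamma>s * Ms \<ge> m0" and ER: "E \<le> R"
    and v1: "v1 = \<beta>E * F * (1 - E / K) - (\<nu>E + \<delta>E) * E"
    and v3: "v3 = \<nu> * \<nu>E * E * (M / (M + \<gamma>s * Ms)) - \<delta>F * F" and a0: "v1 \<ge> 0"
  shows "\<beta>E * v3 * (1 - E / K) + \<beta>E * F * (- v1 / K) - (\<nu>E + \<delta>E) * v1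
         \<le> (\<beta>E * \<nu>E * R / m0) * max (M - \<kappa> * Ms) 0"
proof -
  define q where "q = 1 - E / K"
  define b where "b = max (M - \<kappa> * Ms) 0"
  define m where "m = M + \<gamma>s * Ms"
  define r where "r = M / m"
  have b0: "b \<ge> 0" by (simp add: b_def)
  have m: "m > 0" "m \<ge> m0" using m0 by (auto simp: m_def)
  have R0': "R \<ge> 0" using nn ER by linarith
  have rhs0: "(\<beta>E * \<nu>E * R / m0) * b \<ge> 0" using pos R0' m0 b0 by simp
  have q1: "q \<le> 1" using nn pos by (simp add: q_def)
  have s1: "\<beta>E * F * (- v1 / K) - (\<nu>E + \<delta>E) * v1 \<le> 0"
  proof -
    have "\<beta>E * F * (v1 / K) \<ge> 0" using pos nn a0 by simp
    moreover have "(\<nu>E + \<delta>E) * v1 \<ge> 0" using pos a0 by simp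
    ultimately show ?thesis by simp
  qed
  have main: "\<beta>E * q * v3 \<le> (\<beta>E * \<nu>E * R / m0) * b"
  proof (cases "E = 0")
    case True
    then have "\<beta>E * q * v3 = - (\<beta>E * \<delta>F * F)" by (simp add: q_def v3)
    also have "\<dots> \<le> 0" using pos nn by simp
    finally show ?thesis using rhs0 by linarith
  next
    case False
    then have E0: "E > 0" using nn by simp
    have v1': "\<beta>E * F * q \<ge> (\<nu>E + \<delta>E) * E" using a0 v1 by (simp add: q_def)
    have q0: "q > 0"
    proof (rule ccontr)
      assume "\<not> q > 0"
      then have "\<beta>E * F * q \<le> 0" using pos nn by (simp add: mult_nonneg_nonpos)
      moreover have "(\<nu>E + \<delta>E) * E > 0" using pos E0 by simp
      ultimately show False using v1' by linarith
    qed
    have v3r: "v3 = \<nu> * \<nu>E * E * r - \<delta>F * F" by (simp add: v3 r_def m_def)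
    have "\<beta>E * q * v3 = \<beta>E * q * \<nu> * \<nu>E * E * r - \<delta>F * (\<beta>E * F * q)"
      by (simp add: v3r algebra_simps)
    also have "\<dots> \<le> \<beta>E * q * \<nu> * \<nu>E * E * r - \<delta>F * ((\<nu>E + \<delta>E) * E)"
      using v1' pos by (simp add: mult_left_mono)
    finally have st1: "\<beta>E * q * v3 \<le> \<beta>E * q * \<nu> * \<nu>E * E * r - \<delta>F * ((\<nu>E + \<delta>E) * E)" .
    have rle: "r \<le> \<kappa> / (\<kappa> + \<gamma>s) + b / m"
      using r_le[OF nn(2,4)] m by (simp add: r_def b_def m_def)
    define P where "P = \<beta>E * q * \<nu> * \<nu>E * E"
    have P0: "P \<ge> 0" using pos nu q0 E0 by (simp add: P_def)
    have "P * r \<le> P * (\<kappa> / (\<kappa> + \<gamma>s)) + P * (b / m)"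
      using mult_left_mono[OF rle P0] by (simp add: distrib_left)
    moreover have "P * (\<kappa> / (\<kappa> + \<gamma>s)) \<le> \<delta>F * ((\<nu>E + \<delta>E) * E)"
    proof -
      have "P \<le> \<beta>E * \<nu> * \<nu>E * E" unfolding P_def using q1 q0 pos nu E0
        by (simp add: mult_le_cancel_left1 mult.commute mult.left_commute mult_left_le_one_le)
      then have "P * (\<kappa> / (\<kappa> + \<gamma>s)) \<le> \<beta>E * \<nu> * \<nu>E * E * (\<kappa> / (\<kappa> + \<gamma>s))"
        using kap gam by (intro mult_right_mono) auto
      also have "\<dots> = E * (\<beta>E * \<nu> * \<nu>E * \<kappa> / (\<kappa> + \<gamma>s))" by (simp add: algebra_simps)
      also have "\<dots> \<le> E * (\<delta>F * (\<nu>E + \<delta>E))"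
      proof -
        have "\<beta>E * \<nu> * \<nu>E * \<kappa> / (\<kappa> + \<gamma>s) < \<delta>F * (\<nu>E + \<delta>E)"
          using H2 kap gam by (simp add: divide_less_eq)
        then show ?thesis using E0 by (intro mult_left_mono) auto
      qed
      finally show ?thesis by (simp add: algebra_simps)
    qed
    moreover have "P * (b / m) \<le> (\<beta>E * \<nu>E * R / m0) * b"
    proof -
      have "P \<le> \<beta>E * \<nu>E * R"
      proof -
        have "q * \<nu> \<le> 1" using q1 q0 nu by (meson less_eq_real_def mult_le_one)
        then have "P = \<beta>E * \<nu>E * E * (q * \<nu>)" by (simp add: P_def algebra_simps)
        also have "\<dots> \<le> \<beta>E * \<nu>E * E" using \<open>q * \<nu> \<le> 1\<close> pos E0 q0 nu by (intro mult_left_le) auto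
        also have "\<dots> \<le> \<beta>E * \<nu>E * R" using ER pos by simp
        finally show ?thesis .
      qed
      have "P * (b / m) = (P * b) / m" by simp
      also have "\<dots> \<le> (P * b) / m0" using m m0 P0 b0 by (intro divide_left_mono) auto
      also have "\<dots> \<le> (\<beta>E * \<nu>E * R * b) / m0" using \<open>P \<le> _\<close> b0 m0 by (intro divide_right_mono mult_right_mono) auto
      finally show ?thesis by simp
    qed
    ultimately have "P * r \<le> \<delta>F * ((\<nu>E + \<delta>E) * E) + (\<beta>E * \<nu>E * R / m0) * b" by linarith
    with st1 show ?thesis by (simp add: P_def)
  qed
  have "\<beta>E * v3 * (1 - E / K) = \<beta>E * q * v3" by (simp add: q_def)
  with main s1 show ?thesis unfolding b_def by linarith
qed

lemma b_alg:
  assumes nn: "0 \<le> M" "0 \<le> Ms" and b0: "M - \<kappa> * Ms \<ge> 0"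
  shows "((1 - \<nu>) * \<nu>E * E - \<delta>M * M) - \<kappa> * (k * (M + Ms) - \<delta>s * Ms)
         \<le> max ((1 - \<nu>) * \<nu>E * E - \<delta>M * M) 0"
proof -
  have "\<kappa> * Ms * (\<delta>s - k) \<le> M * (\<delta>s - k)" using b0 k_hi by (intro mult_right_mono) auto
  moreover have "(\<delta>s - k) * M \<le> \<kappa> * k * M" using H4 nn by (intro mult_right_mono) auto
  ultimately have "- \<kappa> * (k * (M + Ms) - \<delta>s * Ms) \<le> 0" by (simp add: algebra_simps)
  then show ?thesis by linarith
qed

lemma c_alg:
  assumes "v2 \<ge> 0" shows "(1 - \<nu>) * \<nu>E * v1 - \<delta>M * v2 \<le> ((1 - \<nu>) * \<nu>E) * max v1 0"
proof -
  have "(1 - \<nu>) * \<nu>E * v1 \<le> ((1 - \<nu>) * \<nu>E) * max v1 0" using nu pos by (intro mult_left_mono) auto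
  moreover have "\<delta>M * v2 \<ge> 0" using assms pos by simp
  ultimately show ?thesis by linarith
qed

end



lemma abs_half: "\<bar>u - w\<bar> < w / 2 \<Longrightarrow> w / 2 \<le> (u::real)" by linarith
lemma abs_one: "\<bar>u - w\<bar> < 1 \<Longrightarrow> u \<le> w + (1::real)" by linarith

context sys begin

lemma MK_nonzero:
  assumes y: "y \<in> MK" "y \<noteq> 0" shows "y$2 + \<gamma>s * y$4 > 0"
proof (rule ccontr)
  assume neg: "\<not> y$2 + \<gamma>s * y$4 > 0"
  have nn: "0 \<le> y$1" "0 \<le> y$2" "0 \<le> y$3" "0 \<le> y$4" and abc: "aF y \<le> 0" "bF y \<le> 0" "cF y \<le> 0"
    using y(1) by (auto simp: MK_iff Dp_iff)
  have "\<gamma>s * y$4 \<ge> 0" using gam nn by simp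
  then have y2: "y$2 = 0" and "\<gamma>s * y$4 = 0" using neg nn by linarith+
  then have y4: "y$4 = 0" using gam by simp
  have "(1 - \<nu>) * \<nu>E * y$1 \<le> 0" using abc(3) y2 by (simp add: cF_def)
  moreover have "(1 - \<nu>) * \<nu>E > 0" using nu pos by simp
  ultimately have y1: "y$1 = 0" using nn by (smt (verit) mult_pos_pos)
  have "\<beta>E * y$3 \<le> 0" using abc(1) y1 by (simp add: aF_def)
  then have y3: "y$3 = 0" using nn pos by (smt (verit) mult_pos_pos)
  show False using y(2) vec4_eqI[OF y1 y2 y3 y4] by simp
qed

lemma calm_aF: "filippov_solution X Dp z \<Longrightarrow> t \<ge> 0 \<Longrightarrow> calm {0..} (\<lambda>s. aF (z s)) t"
  unfolding aF_def by (intro calm_diff calm_mult calm_const calm_divc sol_calm) auto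
lemma calm_bF: "filippov_solution X Dp z \<Longrightarrow> t \<ge> 0 \<Longrightarrow> calm {0..} (\<lambda>s. bF (z s)) t"
  unfolding bF_def by (intro calm_diff calm_mult calm_const sol_calm) auto
lemma calm_cF: "filippov_solution X Dp z \<Longrightarrow> t \<ge> 0 \<Longrightarrow> calm {0..} (\<lambda>s. cF (z s)) t"
  unfolding cF_def by (intro calm_diff calm_mult calm_const sol_calm) auto

lemma local_inv:
  assumes sol: "filippov_solution X Dp z" and t0: "t0 \<ge> 0" "z t0 \<in> MK" "z t0 \<noteq> 0"
  shows "\<exists>h>0. \<forall>t\<in>{t0..t0+h}. z t \<in> MK"
proof -
  obtain N where N: "negligible N"
    and Nd: "\<And>s. 0 < s \<Longrightarrow> s \<notin> N \<Longrightarrow> \<exists>v. (z has_vector_derivative v) (at s) \<and> v \<in> filippov_set X Dp (z s)"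
    using sol_ae[OF sol] by blast
  define m0 where "m0 = (z t0 $ 2 + \<gamma>s * z t0 $ 4) / 2"
  have m0: "m0 > 0" using MK_nonzero[OF t0(2,3)] by (simp add: m0_def)
  define R where "R = z t0 $ 1 + 1"
  have c1: "continuous (at t0 within {0..}) (\<lambda>t. z t $ 2 + \<gamma>s * z t $ 4)"
    by (intro calm_imp_cont calm_add calm_cmult sol_calm[OF sol] t0)
  obtain d1 where d1: "d1 > 0" "\<And>t. t \<in> {0..} \<Longrightarrow> dist t t0 < d1 \<Longrightarrow>
      dist (z t $ 2 + \<gamma>s * z t $ 4) (z t0 $ 2 + \<gamma>s * z t0 $ 4) < m0"
    using c1 m0 unfolding continuous_within_eps_delta by blast
  have c2: "continuous (at t0 within {0..}) (\<lambda>t. z t $ 1)"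
    by (intro calm_imp_cont sol_calm[OF sol] t0)
  obtain d2 where d2: "d2 > 0" "\<And>t. t \<in> {0..} \<Longrightarrow> dist t t0 < d2 \<Longrightarrow> dist (z t $ 1) (z t0 $ 1) < 1"
    using c2 unfolding continuous_within_eps_delta by (meson zero_less_one)
  define L1 where "L1 = \<beta>E * \<nu>E * R / m0"
  have R0': "R > 0" using sol_D[OF sol t0(1)] by (simp add: R_def Dp_iff)
  have L1: "L1 \<ge> 0" using pos R0' m0 by (simp add: L1_def)
  define L where "L = L1 + 1 + (1 - \<nu>) * \<nu>E"
  have "(1 - \<nu>) * \<nu>E \<ge> 0" using nu pos by simp
  then have L: "L \<ge> L1" "L \<ge> 1" "L \<ge> (1 - \<nu>) * \<nu>E" "L > 0" using L1 by (auto simp: L_def)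
  define h where "h = min (min d1 d2 / 2) (1 / (2 * L))"
  have h1: "h \<le> min d1 d2 / 2" "h \<le> 1 / (2 * L)" unfolding h_def by (rule min.cobounded1, rule min.cobounded2)
  have mm: "min d1 d2 \<le> d1" "min d1 d2 \<le> d2" "min d1 d2 > 0" using d1 d2 by simp_all
  have hL: "L * h \<le> 1/2" using mult_left_mono[OF h1(2), of L] L by simp
  have p1: "0 < min d1 d2 / 2" using mm by simp
  have p2: "0 < 1 / (2 * L)" using L by simp
  have h0: "h > 0" using p1 p2 unfolding h_def min_def by (auto split: if_split)
  have "h < d1" "h < d2" using h1(1) mm by linarith+
  with h0 hL have h: "h > 0" "h < d1" "h < d2" "L * h \<le> 1/2" by auto
  define W where "W t = max (aF (z t)) 0 + max (bF (z t)) 0 + max (cF (z t)) 0" for t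
  have Wz: "W t = 0" if "t \<in> {t0..t0+h}" for t
  proof (rule gronwall_zero[of t0 "t0+h" W L N])
    show "t0 \<le> t0 + h" using h by simp
    show "calm {t0..t0 + h} W t" if "t \<in> {t0..t0+h}" for t
    proof -
      have "calm {0..} W t" unfolding W_def using that t0
        by (intro calm_add calm_max0 calm_aF[OF sol] calm_bF[OF sol] calm_cF[OF sol]) auto
      then show ?thesis by (rule calm_subset) (use t0 in auto)
    qed
    show "W t \<ge> 0" if "t \<in> {t0..t0+h}" for t by (simp add: W_def)
    show "W t0 = 0" using t0(2) by (simp add: W_def MK_iff)
    show "0 \<le> L" using L by simp
    show "L * (t0 + h - t0) < 1" using h by simp
    show "negligible N" by fact
    fix s e :: real assume s: "s \<in> {t0<..<t0+h}" "s \<notin> N" "e > 0"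
    have s0: "s > 0" using s t0 by simp
    obtain v where v: "(z has_vector_derivative v) (at s)" "v \<in> filippov_set X Dp (z s)"
      using Nd[OF s0 s(2)] by blast
    define x where "x = z s"
    have xD: "x \<in> Dp" using sol_D[OF sol] s0 by (simp add: x_def)
    have nn: "0 \<le> x$1" "0 \<le> x$2" "0 \<le> x$3" "0 \<le> x$4" using xD by (auto simp: Dp_iff)
    have ds: "dist s t0 < d1" "dist s t0 < d2" using s h by (auto simp: dist_real_def)
    have "\<bar>(x$2 + \<gamma>s * x$4) - (z t0 $ 2 + \<gamma>s * z t0 $ 4)\<bar> < m0"
      using d1(2)[of s] ds s0 by (auto simp: x_def dist_real_def)
    then have xm: "x$2 + \<gamma>s * x$4 \<ge> m0" unfolding m0_def by (rule abs_half)
    have "\<bar>x$1 - z t0 $ 1\<bar> < 1"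
      using d2(2)[of s] ds s0 by (auto simp: x_def dist_real_def)
    then have xR: "x$1 \<le> R" unfolding R_def by (rule abs_one)
    have vX: "v $ i = X x $ i" for i using filX[OF v(2)[folded x_def]] xm m0 by simp
    have dv: "((\<lambda>t. z t $ i) has_real_derivative v $ i) (at s)" for i by (rule vd_nth[OF v(1)])
    have da0: "((\<lambda>t. \<beta>E * z t $ 3 * (1 - z t $ 1 / K) - (\<nu>E + \<delta>E) * z t $ 1) has_real_derivative
        (\<beta>E * v$3 * (1 - z s $ 1 / K) + (0 - v$1 / K) * (\<beta>E * z s $ 3)) - (\<nu>E + \<delta>E) * v$1) (at s)"
      by (intro DERIV_diff DERIV_mult DERIV_cmult DERIV_const DERIV_cdivide dv)
    have da: "((\<lambda>t. aF (z t)) has_real_derivative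
        \<beta>E * v$3 * (1 - x$1 / K) + \<beta>E * x$3 * (- v$1 / K) - (\<nu>E + \<delta>E) * v$1) (at s)"
      unfolding aF_def by (rule DERIV_cong[OF da0]) (simp add: x_def algebra_simps)
    have db0: "((\<lambda>t. z t $ 2 - \<kappa> * z t $ 4) has_real_derivative v$2 - \<kappa> * v$4) (at s)"
      by (intro DERIV_diff DERIV_cmult dv)
    have db: "((\<lambda>t. bF (z t)) has_real_derivative v$2 - \<kappa> * v$4) (at s)"
      unfolding bF_def by (rule db0)
    have dc0: "((\<lambda>t. (1 - \<nu>) * \<nu>E * z t $ 1 - \<delta>M * z t $ 2) has_real_derivative (1 - \<nu>) * \<nu>E * v$1 - \<delta>M * v$2) (at s)"
      by (intro DERIV_diff DERIV_cmult dv)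
    have dc: "((\<lambda>t. cF (z t)) has_real_derivative (1 - \<nu>) * \<nu>E * v$1 - \<delta>M * v$2) (at s)"
      unfolding cF_def by (rule dc0)
    define A where "A = max (aF x) 0"
    define B where "B = max (bF x) 0"
    define Cc where "Cc = max (cF x) 0"
    have e3: "e / 3 > 0" using s by simp
    have ea: "eventually (\<lambda>t. max (aF (z t)) 0 - max (aF (z s)) 0 \<le> (L1 * B + e/3) * (t - s)) (at_right s)"
    proof (rule pos_right_le[OF da _ _ e3])
      assume "aF (z s) \<ge> 0"
      then have "X x $ 1 \<ge> 0" by (simp add: X_simps aF_def x_def)
      show "\<beta>E * v$3 * (1 - x$1 / K) + \<beta>E * x$3 * (- v$1 / K) - (\<nu>E + \<delta>E) * v$1 \<le> L1 * B"
        unfolding L1_def B_def bF_def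
        by (rule a_alg[OF nn(1,2,3,4) m0 xm xR]) (use \<open>X x $ 1 \<ge> 0\<close> in \<open>simp_all add: vX X_simps\<close>)
    next
      show "0 \<le> L1 * B" using L1 by (simp add: B_def)
    qed
    have eb: "eventually (\<lambda>t. max (bF (z t)) 0 - max (bF (z s)) 0 \<le> (Cc + e/3) * (t - s)) (at_right s)"
    proof (rule pos_right_le[OF db _ _ e3])
      assume "bF (z s) \<ge> 0"
      then have "x$2 - \<kappa> * x$4 \<ge> 0" by (simp add: bF_def x_def)
      from b_alg[OF nn(2,4) this, of "x$1"]
      show "v$2 - \<kappa> * v$4 \<le> Cc" by (simp add: Cc_def cF_def vX X_simps)
    qed (simp add: Cc_def)
    have ec: "eventually (\<lambda>t. max (cF (z t)) 0 - max (cF (z s)) 0 \<le> ((1 - \<nu>) * \<nu>E * A + e/3) * (t - s)) (at_right s)"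
    proof (rule pos_right_le[OF dc _ _ e3])
      assume "cF (z s) \<ge> 0"
      then have "v$2 \<ge> 0" by (simp add: cF_def x_def vX X_simps)
      from c_alg[OF this, of "v$1"]
      show "(1 - \<nu>) * \<nu>E * v$1 - \<delta>M * v$2 \<le> (1 - \<nu>) * \<nu>E * A"
        by (simp add: A_def aF_def vX X_simps)
    next
      show "0 \<le> (1 - \<nu>) * \<nu>E * A" using nu pos by (simp add: A_def)
    qed
    have bnd: "L1 * B + Cc + (1 - \<nu>) * \<nu>E * A \<le> L * W s"
    proof -
      have "L1 * B \<le> L * B" using L by (intro mult_right_mono) (auto simp: B_def)
      moreover have "Cc \<le> L * Cc" using L by (simp add: Cc_def mult_le_cancel_right1)
      moreover have "(1 - \<nu>) * \<nu>E * A \<le> L * A" using L by (intro mult_right_mono) (auto simp: A_def)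
      moreover have "W s = A + B + Cc" by (simp add: W_def A_def B_def Cc_def x_def)
      ultimately show ?thesis by (simp add: distrib_left)
    qed
    have "eventually (\<lambda>y. s < y) (at_right s)" by (simp add: eventually_at_right_less)
    with ea eb ec show "eventually (\<lambda>t. W t - W s \<le> (L * W s + e) * (t - s)) (at_right s)"
    proof eventually_elim
      case (elim t)
      have "W t - W s \<le> (L1 * B + e/3) * (t - s) + (Cc + e/3) * (t - s) + ((1 - \<nu>) * \<nu>E * A + e/3) * (t - s)"
        using elim by (simp add: W_def)
      also have "\<dots> = (L1 * B + Cc + (1 - \<nu>) * \<nu>E * A + e) * (t - s)" by (simp add: field_simps)
      also have "\<dots> \<le> (L * W s + e) * (t - s)" using bnd elim by (intro mult_right_mono) auto
      finally show ?case .
    qed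
  qed (use that in auto)
  have "z t \<in> MK" if "t \<in> {t0..t0+h}" for t
  proof -
    have "W t = 0" by (rule Wz[OF that])
    then have "aF (z t) \<le> 0" "bF (z t) \<le> 0" "cF (z t) \<le> 0"
      unfolding W_def by (smt (verit) max.cobounded1 max.cobounded2)+
    moreover have "z t \<in> Dp" using sol_D[OF sol] that t0 by auto
    ultimately show ?thesis by (simp add: MK_iff)
  qed
  then show ?thesis using h by blast
qed

end



lemma left_closed:
  fixes f :: "real \<Rightarrow> real"
  assumes "continuous_on {0..T} f" "\<And>u. u \<in> {0..<T} \<Longrightarrow> f u \<le> 0" "T > 0"
  shows "f T \<le> 0"
proof -
  define C where "C = {0..T} \<inter> f -` {..0}"
  have "closed C" unfolding C_def by (rule continuous_closed_preimage[OF assms(1)]) auto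
  moreover have "{0..<T} \<subseteq> C" using assms(2) by (auto simp: C_def)
  ultimately have "closure {0..<T} \<subseteq> C" by (rule closure_minimal[rotated])
  then have "{0..T} \<subseteq> C" using assms(3) by (simp add: closure_atLeastLessThan)
  then have "T \<in> C" using assms(3) by auto
  then show ?thesis by (simp add: C_def)
qed

context sys begin

lemma zero_MK: "0 \<in> MK"
  by (simp add: MK_iff Dp_iff aF_def bF_def cF_def)

lemma invariant:
  assumes sol: "filippov_solution X Dp z" and z0: "z 0 \<in> MK" and t: "t \<ge> 0"
  shows "z t \<in> MK"
proof (rule ccontr)
  assume "z t \<notin> MK"
  define Bad where "Bad = {t. 0 \<le> t \<and> z t \<notin> MK}"
  have ne: "Bad \<noteq> {}" using t \<open>z t \<notin> MK\<close> by (auto simp: Bad_def)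
  have bdd: "bdd_below Bad" by (auto simp: Bad_def bdd_below_def)
  define T where "T = Inf Bad"
  have T0: "T \<ge> 0" unfolding T_def by (rule cInf_greatest[OF ne]) (auto simp: Bad_def)
  have lowT: "T \<le> u" if "u \<in> Bad" for u unfolding T_def by (rule cInf_lower[OF that bdd])
  have before: "z u \<in> MK" if "u \<in> {0..<T}" for u
    using lowT[of u] that by (auto simp: Bad_def)
  have zT: "z T \<in> MK"
  proof (cases "T = 0")
    case True then show ?thesis using z0 by simp
  next
    case False
    then have Tp: "T > 0" using T0 by simp
    have cont: "continuous_on {0..T} (\<lambda>s. f (z s))"
      if "\<And>t. t \<ge> 0 \<Longrightarrow> calm {0..} (\<lambda>s. f (z s)) t" for f
      by (rule calm_imp_cont_on, rule calm_subset[OF that]) auto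
    have "aF (z T) \<le> 0"
      by (rule left_closed[OF cont[OF calm_aF[OF sol]] _ Tp]) (use before in \<open>auto simp: MK_iff\<close>)
    moreover have "bF (z T) \<le> 0"
      by (rule left_closed[OF cont[OF calm_bF[OF sol]] _ Tp]) (use before in \<open>auto simp: MK_iff\<close>)
    moreover have "cF (z T) \<le> 0"
      by (rule left_closed[OF cont[OF calm_cF[OF sol]] _ Tp]) (use before in \<open>auto simp: MK_iff\<close>)
    moreover have "z T \<in> Dp" using sol_D[OF sol T0] .
    ultimately show ?thesis by (simp add: MK_iff)
  qed
  obtain h where h: "h > 0" "\<forall>u\<in>{T..T+h}. z u \<in> MK"
  proof (cases "z T = 0")
    case True
    have "\<forall>u\<in>{T..T+1}. z u \<in> MK" using zero_stays[OF sol T0 True] zero_MK by auto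
    then show ?thesis using that[of 1] by simp
  next
    case False
    then show ?thesis using local_inv[OF sol T0 zT False] that by blast
  qed
  have "Inf Bad < T + h" using h by (simp add: T_def)
  then obtain u where u: "u \<in> Bad" "u < T + h" using cInf_less_iff[OF ne bdd] by blast
  then have "u \<in> {T..T+h}" using lowT by auto
  then show False using h u by (auto simp: Bad_def)
qed

end



lemma exp_neg_lim: "(c::real) > 0 \<Longrightarrow> ((\<lambda>t. exp (- c * t)) \<longlongrightarrow> 0) at_top"
proof -
  assume c: "c > 0"
  have "filterlim (\<lambda>t::real. (- c) * t) at_bot at_top"
    by (rule filterlim_tendsto_neg_mult_at_bot[OF tendsto_const _ filterlim_ident]) (use c in simp)
  then show ?thesis by (rule filterlim_compose[OF exp_at_bot])
qed

lemma mid1: "a < (b::real) \<Longrightarrow> a < (a + b) / 2" by (simp add: field_simps)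
lemma mid2: "a < (b::real) \<Longrightarrow> (a + b) / 2 < b" by (simp add: field_simps)

context sys begin

definition "rho = \<kappa> / (\<kappa> + \<gamma>s)"
definition "w1 = (\<nu> * \<nu>E * rho / (\<nu>E + \<delta>E) + \<delta>F / \<beta>E) / 2"
definition "c1 = w1 * (\<nu>E + \<delta>E) - \<nu> * \<nu>E * rho"
definition "c3 = \<delta>F - w1 * \<beta>E"
definition "w2 = c1 / (2 * ((1 - \<nu>) * \<nu>E))"
definition "w4 = w2 * \<delta>M / (2 * k)"
definition "mu = min (min (c1 / 2) c3) (min (w2 * \<delta>M / 2) (w4 * (\<delta>s - k)))"
definition "Vf (y::real^4) = w1 * y$1 + w2 * y$2 + y$3 + w4 * y$4"

lemma rho_ineq: "\<nu> * \<nu>E * rho / (\<nu>E + \<delta>E) < \<delta>F / \<beta>E"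
proof -
  have "\<beta>E * \<nu> * \<nu>E * \<kappa> / (\<kappa> + \<gamma>s) < \<delta>F * (\<nu>E + \<delta>E)"
    using H2 kap gam by (simp add: divide_less_eq)
  then have "\<beta>E * (\<nu> * \<nu>E * rho) < \<delta>F * (\<nu>E + \<delta>E)" by (simp add: rho_def mult.assoc)
  then show ?thesis using pos by (simp add: divide_less_eq less_divide_eq mult.commute)
qed

lemma weights: "c1 > 0" "c3 > 0" "w1 > 0" "w2 > 0" "w4 > 0" "mu > 0" "rho \<ge> 0"
proof -
  have r: "rho \<ge> 0" using kap gam by (simp add: rho_def)
  let ?a = "\<nu> * \<nu>E * rho / (\<nu>E + \<delta>E)" and ?b = "\<delta>F / \<beta>E"
  have ab: "?a < ?b" by (rule rho_ineq)
  have a0: "?a \<ge> 0" using r nu pos by simp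
  have w1a: "?a < w1" "w1 < ?b" unfolding w1_def using mid1[OF ab] mid2[OF ab] by simp_all
  have "c1 = (\<nu>E + \<delta>E) * (w1 - ?a)" using pos by (simp add: c1_def field_simps)
  then show c1: "c1 > 0" using w1a pos by simp
  have "c3 = \<beta>E * (?b - w1)" using pos by (simp add: c3_def field_simps)
  then show c3: "c3 > 0" using w1a pos by simp
  show "w1 > 0" using w1a a0 by linarith
  show w2: "w2 > 0" using c1 nu pos by (simp add: w2_def)
  show w4: "w4 > 0" using w2 pos k_pos by (simp add: w4_def)
  show "mu > 0" using c1 c3 w2 w4 pos k_hi by (simp add: mu_def)
  show "rho \<ge> 0" by fact
qed

lemma V_decay_pt:
  assumes y: "y \<in> MK" "y$2 + \<gamma>s * y$4 > 0"
  shows "w1 * X y $ 1 + w2 * X y $ 2 + X y $ 3 + w4 * X y $ 4 \<le> - mu * (y$1 + y$2 + y$3 + y$4)"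
proof -
  have nn: "0 \<le> y$1" "0 \<le> y$2" "0 \<le> y$3" "0 \<le> y$4" and b: "bF y \<le> 0"
    using y(1) by (auto simp: MK_iff Dp_iff)
  have W: "c1 > 0" "c3 > 0" "w1 > 0" "w2 > 0" "w4 > 0" "mu > 0" "rho \<ge> 0" by (rule weights)+
  have x1: "X y $ 1 \<le> \<beta>E * y$3 - (\<nu>E + \<delta>E) * y$1"
  proof -
    have "\<beta>E * y$3 * (y$1 / K) \<ge> 0" using pos nn by simp
    then show ?thesis unfolding X_simps by (simp add: algebra_simps)
  qed
  have x3: "X y $ 3 \<le> \<nu> * \<nu>E * rho * y$1 - \<delta>F * y$3"
  proof -
    have "y$2 / (y$2 + \<gamma>s * y$4) \<le> rho"
      using r_le[OF nn(2,4) y(2)] b by (simp add: rho_def bF_def max_def)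
    then have "\<nu> * \<nu>E * y$1 * (y$2 / (y$2 + \<gamma>s * y$4)) \<le> \<nu> * \<nu>E * y$1 * rho"
      using nu pos nn by (intro mult_left_mono) auto
    then show ?thesis unfolding X_simps by (simp add: algebra_simps)
  qed
  have e2: "w2 * ((1 - \<nu>) * \<nu>E) = c1 / 2" using nu pos by (simp add: w2_def)
  have e4: "w4 * k = w2 * \<delta>M / 2" using k_pos by (simp add: w4_def)
  have "w1 * X y $ 1 + w2 * X y $ 2 + X y $ 3 + w4 * X y $ 4
      \<le> w1 * (\<beta>E * y$3 - (\<nu>E + \<delta>E) * y$1) + w2 * X y $ 2 + (\<nu> * \<nu>E * rho * y$1 - \<delta>F * y$3) + w4 * X y $ 4"
    using x1 x3 W by (intro add_mono mult_left_mono order_refl) auto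
  also have "\<dots> = - c1 * y$1 + w2 * ((1 - \<nu>) * \<nu>E) * y$1 - w2 * \<delta>M * y$2 - c3 * y$3 + (w4 * k) * y$2 - w4 * (\<delta>s - k) * y$4"
    unfolding X_simps c1_def c3_def by (simp add: algebra_simps)
  also have "\<dots> = - (c1 / 2) * y$1 - (w2 * \<delta>M / 2) * y$2 - c3 * y$3 - w4 * (\<delta>s - k) * y$4"
    unfolding e2 e4 by (simp add: algebra_simps)
  also have "\<dots> \<le> - mu * y$1 - mu * y$2 - mu * y$3 - mu * y$4"
  proof -
    have "mu * y$1 \<le> (c1 / 2) * y$1" using nn by (intro mult_right_mono) (auto simp: mu_def)
    moreover have "mu * y$2 \<le> (w2 * \<delta>M / 2) * y$2" using nn by (intro mult_right_mono) (auto simp: mu_def)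
    moreover have "mu * y$3 \<le> c3 * y$3" using nn by (intro mult_right_mono) (auto simp: mu_def)
    moreover have "mu * y$4 \<le> (w4 * (\<delta>s - k)) * y$4" using nn by (intro mult_right_mono) (auto simp: mu_def)
    ultimately show ?thesis by (simp add: mult.assoc)
  qed
  also have "\<dots> = - mu * (y$1 + y$2 + y$3 + y$4)" by (simp add: algebra_simps)
  finally show ?thesis .
qed

end



context sys begin

definition "Wmax = w1 + w2 + 1 + w4"
definition "Wmin = min (min w1 w2) (min 1 w4)"
definition "lam = mu / Wmax"

lemma Wpos: "Wmax > 0" "Wmin > 0" "lam > 0"
  using weights by (auto simp: Wmax_def Wmin_def lam_def)

lemma V_bounds:
  assumes "y \<in> Dp"
  shows "Vf y \<le> Wmax * (y$1 + y$2 + y$3 + y$4)" "Wmin * (y$1 + y$2 + y$3 + y$4) \<le> Vf y"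
proof -
  have nn: "0 \<le> y$1" "0 \<le> y$2" "0 \<le> y$3" "0 \<le> y$4" using assms by (auto simp: Dp_iff)
  have W: "c1 > 0" "c3 > 0" "w1 > 0" "w2 > 0" "w4 > 0" "mu > 0" "rho \<ge> 0" by (rule weights)+
  have "w1 \<le> Wmax" "w2 \<le> Wmax" "1 \<le> Wmax" "w4 \<le> Wmax" using W by (auto simp: Wmax_def)
  then have "w1 * y$1 \<le> Wmax * y$1" "w2 * y$2 \<le> Wmax * y$2" "1 * y$3 \<le> Wmax * y$3" "w4 * y$4 \<le> Wmax * y$4"
    using nn by (meson mult_right_mono)+
  then show "Vf y \<le> Wmax * (y$1 + y$2 + y$3 + y$4)" by (simp add: Vf_def distrib_left)
  have "Wmin \<le> w1" "Wmin \<le> w2" "Wmin \<le> 1" "Wmin \<le> w4" by (auto simp: Wmin_def)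
  then have "Wmin * y$1 \<le> w1 * y$1" "Wmin * y$2 \<le> w2 * y$2" "Wmin * y$3 \<le> 1 * y$3" "Wmin * y$4 \<le> w4 * y$4"
    using nn by (meson mult_right_mono)+
  then show "Wmin * (y$1 + y$2 + y$3 + y$4) \<le> Vf y" by (simp add: Vf_def distrib_left)
qed

lemma dV_bound:
  assumes sol: "filippov_solution X Dp z" and z0: "z 0 \<in> MK" and s: "s > 0"
    and v: "v \<in> filippov_set X Dp (z s)"
  shows "w1 * v$1 + w2 * v$2 + v$3 + w4 * v$4 \<le> - mu * (z s$1 + z s$2 + z s$3 + z s$4)"
proof -
  have W: "c1 > 0" "c3 > 0" "w1 > 0" "w2 > 0" "w4 > 0" "mu > 0" "rho \<ge> 0" by (rule weights)+
  have xM: "z s \<in> MK" using invariant[OF sol z0] s by simp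
  show ?thesis
  proof (cases "z s = 0")
    case True
    have "w1 * v$1 + w2 * v$2 + 1 * v$3 + w4 * v$4
        \<le> (w1 * \<beta>E + w2 * \<nu>E + 1 * \<nu>E + w4 * k) * (z s$1 + z s$2 + z s$3 + z s$4)"
      by (rule fil_lin[OF v]) (use W in auto)
    then show ?thesis using True by simp
  next
    case False
    have pz: "z s $ 2 + \<gamma>s * z s $ 4 > 0" by (rule MK_nonzero[OF xM False])
    have "v $ i = X (z s) $ i" for i using filX[OF v] pz by simp
    then show ?thesis using V_decay_pt[OF xM pz] by simp
  qed
qed

lemma decay:
  assumes sol: "filippov_solution X Dp z" and z0: "z 0 \<in> MK" and t: "t \<ge> 0"
  shows "Vf (z t) \<le> exp (- lam * t) * Vf (z 0)"
proof -
  obtain N where N: "negligible N"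
    and Nd: "\<And>s. 0 < s \<Longrightarrow> s \<notin> N \<Longrightarrow> \<exists>v. (z has_vector_derivative v) (at s) \<and> v \<in> filippov_set X Dp (z s)"
    using sol_ae[OF sol] by blast
  define G where "G u = exp (lam * u) * Vf (z u)" for u
  have dexp: "((\<lambda>u. exp (lam * u)) has_real_derivative exp (lam * x) * lam) (at x)" for x
    using DERIV_fun_exp[OF DERIV_cmult_Id[of lam x UNIV]] by simp
  have calmV: "calm {0..} (\<lambda>u. Vf (z u)) x" if "x \<ge> 0" for x
    unfolding Vf_def by (intro calm_add calm_mult calm_const sol_calm[OF sol] that)
  have "G t \<le> G 0"
  proof (rule dini_mono[where g=G and a=0 and b=t and N=N])
    show "0 \<le> t" by fact
    have calmG: "calm {0..t} G x" if "x \<in> {0..t}" for x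
    proof -
      have "calm {0..} G x" unfolding G_def
        by (intro calm_mult deriv_calm[OF dexp] calmV) (use that in auto)
      then show ?thesis by (rule calm_subset) auto
    qed
    show "continuous_on {0..t} G" by (rule calm_imp_cont_on[OF calmG])
    show "negligible N" by fact
    show "\<exists>T B. open T \<and> x \<in> T \<and> (\<forall>y\<in>{0..t} \<inter> T. \<bar>G y - G x\<bar> \<le> B * \<bar>y - x\<bar>)"
      if "x \<in> N" "x \<in> {0..t}" for x using calmG[OF that(2)] unfolding calm_def by blast
    fix s e :: real assume s: "s \<in> {0<..<t}" "s \<notin> N" "e > 0"
    obtain v where v: "(z has_vector_derivative v) (at s)" "v \<in> filippov_set X Dp (z s)"
      using Nd[of s] s by auto
    have dv: "((\<lambda>u. z u $ i) has_real_derivative v $ i) (at s)" for i by (rule vd_nth[OF v(1)])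
    have dV: "((\<lambda>u. Vf (z u)) has_real_derivative w1 * v$1 + w2 * v$2 + v$3 + w4 * v$4) (at s)"
      unfolding Vf_def by (intro DERIV_add DERIV_cmult dv)
    have dG: "(G has_real_derivative exp (lam * s) * lam * Vf (z s) + (w1 * v$1 + w2 * v$2 + v$3 + w4 * v$4) * exp (lam * s)) (at s)"
      unfolding G_def using DERIV_mult[OF dexp dV] by simp
    have le0: "exp (lam * s) * lam * Vf (z s) + (w1 * v$1 + w2 * v$2 + v$3 + w4 * v$4) * exp (lam * s) \<le> 0"
    proof -
      define S where "S = z s$1 + z s$2 + z s$3 + z s$4"
      have "z s \<in> Dp" using sol_D[OF sol] s by simp
      then have "Vf (z s) \<le> Wmax * S" using V_bounds by (simp add: S_def)
      then have "lam * Vf (z s) \<le> lam * (Wmax * S)" using Wpos by (intro mult_left_mono) auto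
      also have "\<dots> = mu * S" using Wpos by (simp add: lam_def)
      finally have 1: "lam * Vf (z s) \<le> mu * S" .
      have 2: "w1 * v$1 + w2 * v$2 + v$3 + w4 * v$4 \<le> - mu * S"
        using dV_bound[OF sol z0 _ v(2)] s by (simp add: S_def)
      have "lam * Vf (z s) + (w1 * v$1 + w2 * v$2 + v$3 + w4 * v$4) \<le> 0" using 1 2 by linarith
      then have "exp (lam * s) * (lam * Vf (z s) + (w1 * v$1 + w2 * v$2 + v$3 + w4 * v$4)) \<le> 0"
        by (simp add: mult_nonneg_nonpos)
      then show ?thesis by (simp add: algebra_simps)
    qed
    have "eventually (\<lambda>u. G u - G s \<le> (0 + e) * (u - s)) (at_right s)"
      by (rule ev_from_deriv[OF dG le0 s(3)])
    from ev_exists[OF this] s show "\<exists>u\<in>{s<..t}. G u - G s \<le> e * (u - s)" by auto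
  qed
  then have "exp (lam * t) * Vf (z t) \<le> Vf (z 0)" by (simp add: G_def)
  then have "exp (- lam * t) * (exp (lam * t) * Vf (z t)) \<le> exp (- lam * t) * Vf (z 0)"
    by (intro mult_left_mono) auto
  moreover have "exp (- lam * t) * (exp (lam * t) * Vf (z t)) = Vf (z t)"
    by (simp add: mult.assoc[symmetric] exp_add[symmetric])
  ultimately show ?thesis by linarith
qed

lemma norm_le_sum: "y \<in> Dp \<Longrightarrow> norm y \<le> y$1 + y$2 + y$3 + y$4"
  using norm_le_l1_cart[of y] by (simp add: sum_4 Dp_iff)

lemma sum_le_norm: "y$1 + y$2 + y$3 + y$4 \<le> 4 * norm (y::real^4)"
  using component_le_norm_cart[of y 1] component_le_norm_cart[of y 2]
    component_le_norm_cart[of y 3] component_le_norm_cart[of y 4] by linarith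

lemma sol_bound:
  assumes sol: "filippov_solution X Dp z" and z0: "z 0 \<in> MK" and t: "t \<ge> 0"
  shows "norm (z t) \<le> (4 * Wmax / Wmin) * norm (z 0) * exp (- lam * t)"
proof -
  have D: "z t \<in> Dp" "z 0 \<in> Dp" using sol_D[OF sol] t by auto
  have "norm (z t) \<le> z t$1 + z t$2 + z t$3 + z t$4" by (rule norm_le_sum[OF D(1)])
  also have "\<dots> \<le> Vf (z t) / Wmin" using V_bounds(2)[OF D(1)] Wpos by (simp add: le_divide_eq mult.commute)
  also have "\<dots> \<le> exp (- lam * t) * Vf (z 0) / Wmin" using decay[OF sol z0 t] Wpos by (simp add: divide_right_mono)
  also have "\<dots> \<le> exp (- lam * t) * (Wmax * (4 * norm (z 0))) / Wmin"
  proof -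
    have "Vf (z 0) \<le> Wmax * (4 * norm (z 0))"
      using V_bounds(1)[OF D(2)] sum_le_norm[of "z 0"] Wpos
      by (meson mult_left_mono less_imp_le order_trans)
    then show ?thesis using Wpos by (intro divide_right_mono mult_left_mono) auto
  qed
  also have "\<dots> = (4 * Wmax / Wmin) * norm (z 0) * exp (- lam * t)" by (simp add: field_simps)
  finally show ?thesis .
qed

lemma GAS: "filippov_GAS X Dp MK"
  unfolding filippov_GAS_def
proof (intro conjI allI impI)
  define Kc where "Kc = 4 * Wmax / Wmin"
  have Kc: "Kc > 0" using Wpos by (simp add: Kc_def)
  fix \<epsilon> :: real assume e: "\<epsilon> > 0"
  show "\<exists>\<delta>>0. \<forall>z. filippov_solution X Dp z \<and> z 0 \<in> MK \<and> norm (z 0) < \<delta> \<longrightarrow> (\<forall>t>0. norm (z t) < \<epsilon>)"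
  proof (intro exI[of _ "\<epsilon> / Kc"] conjI allI impI)
    show "\<epsilon> / Kc > 0" using e Kc by simp
    fix z :: "real \<Rightarrow> real^4" and t :: real assume z: "filippov_solution X Dp z \<and> z 0 \<in> MK \<and> norm (z 0) < \<epsilon> / Kc" and t: "t > 0"
    have "norm (z t) \<le> Kc * norm (z 0) * exp (- lam * t)"
      using sol_bound[of z t] z t by (simp add: Kc_def)
    also have "\<dots> \<le> Kc * norm (z 0)"
    proof -
      have "exp (- lam * t) \<le> 1" using Wpos t by simp
      then show ?thesis using Kc by (intro mult_left_le) auto
    qed
    also have "\<dots> < Kc * (\<epsilon> / Kc)" using z Kc by (intro mult_strict_left_mono) auto
    also have "\<dots> = \<epsilon>" using Kc by simp
    finally show "norm (z t) < \<epsilon>" .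
  qed
next
  fix z :: "real \<Rightarrow> real^4" assume z: "filippov_solution X Dp z \<and> z 0 \<in> MK"
  define Kc where "Kc = 4 * Wmax / Wmin"
  show "(z \<longlongrightarrow> 0) at_top"
  proof (rule Lim_null_comparison)
    show "eventually (\<lambda>t. norm (z t) \<le> Kc * norm (z 0) * exp (- lam * t)) at_top"
      using eventually_ge_at_top[of 0] by eventually_elim (use sol_bound z in \<open>simp add: Kc_def\<close>)
    have "((\<lambda>t. Kc * norm (z 0) * exp (- lam * t)) \<longlongrightarrow> Kc * norm (z 0) * 0) at_top"
      by (intro tendsto_mult tendsto_const exp_neg_lim Wpos)
    then show "((\<lambda>t. Kc * norm (z 0) * exp (- lam * t)) \<longlongrightarrow> 0) at_top" by simp
  qed
qed

end

theorem mainTheorem10: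
  fixes \<beta>E \<nu>E \<delta>E \<delta>M \<delta>F \<delta>s K \<nu> \<gamma>s k \<kappa> :: real
  assumes "\<beta>E > 0" "\<nu>E > 0" "\<delta>E > 0" "\<delta>M > 0" "\<delta>F > 0" "\<delta>s > 0" "K > 0"
    and "0 < \<nu>" "\<nu> < 1" and "0 < \<gamma>s" "\<gamma>s \<le> 1" and "\<delta>s \<ge> \<delta>M"
    and R0: "\<beta>E * \<nu> * \<nu>E / (\<delta>F * (\<nu>E + \<delta>E)) > 1"
    and k_lo: "(\<beta>E * \<nu> * \<nu>E - (\<nu>E + \<delta>E) * \<delta>F)
                / (\<beta>E * \<nu> * \<nu>E - (1 - \<gamma>s) * (\<nu>E + \<delta>E) * \<delta>F) * \<delta>s < k"
    and k_hi: "k < \<delta>s"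
    and "\<kappa> > 0"
    and kap_lo: "(\<delta>s - k) / k \<le> \<kappa>"
    and kap_hi: "\<kappa> < \<gamma>s * \<delta>F * (\<nu>E + \<delta>E) / (\<beta>E * \<nu> * \<nu>E - \<delta>F * (\<nu>E + \<delta>E))"
  shows "filippov_GAS (closed_loop \<beta>E \<nu>E \<delta>E \<delta>M \<delta>F \<delta>s K \<nu> \<gamma>s k) Dp
           (Mset \<beta>E \<nu>E \<delta>E \<delta>M K \<nu> \<kappa>)"
proof -
  interpret sys \<beta>E \<nu>E \<delta>E \<delta>M \<delta>F \<delta>s K \<nu> \<gamma>s k \<kappa>
    by (rule sys.intro) (use assms in auto)
  show ?thesis by (rule GAS)
qed

end
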